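(* Let $G=(V,E)$ be a finite connected simple graph with vertex-weight $m_0\colon V\to\mathbb{R}_{>0}$ and distance parameter $d\colon E\to\mathbb{R}_{>0}$; set $M=\sum_{u\in V}m_0(u)$ and $D^2=\sum_{uv\in E}d(uv)^2$. Then $$\delta(G,m_0,d)=\max\Big\{1-\frac{D^2/M}{\sigma(G,m_0,d)},\,0\Big\}.$$
   Context: Edges are unordered pairs; $v\sim u$ means $uv\in E$; $\|\cdot\|$ is the Euclidean norm on $\mathbb{R}^{|V|}$. $\mathrm{bar}(\varphi)=\frac1M\sum_u m_0(u)\varphi(u)$. $\delta(G,m_0,d)=\inf\|\mathrm{bar}(\varphi)\|^2$ over all $\varphi\colon V\to\mathbb{R}^{|V|}$ with $\sum_u m_0(u)\|\varphi(u)\|^2=M$ and $\|\varphi(u)-\varphi(v)\|\le d(uv)$ for all $uv\in E$. For an edge-weight $m_1\colon E\to\mathbb{R}_{\ge0}$ with $(V,\{uv:m_1(uv)>0\})$ connected, the Laplacian is $(\Delta_{(m_0,m_1)}f)(u)=\frac{1}{m_0(u)}\big[(\sum_{v\sim u}m_1(uv))f(u)-\sum_{v\sim u}m_1(uv)f(v)\big]$ and $\lambda_1(G,(m_0,m_1))$ is its smallest positive eigenvalue, equivalently $\inf_f\frac{\sum_{uv}m_1(uv)(f(u)-f(v))^2}{\sum_u m_0(u)(f(u)-\bar f)^2}$ over nonconstant $f$, $\bar f=\frac1M\sum_u m_0(u)f(u)$. $\sigma(G,m_0,d)=\sup_{m_1}\lambda_1(G,(m_0,m_1))$ over all such edge-weights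 $m_1$ with $\sum_{uv\in E}m_1(uv)d(uv)^2=D^2$. *)

theory Defs
  imports Complex_Main
begin

definition simple_graph :: "'a set \<Rightarrow> 'a set set \<Rightarrow> bool" where
  "simple_graph V E \<longleftrightarrow> finite V \<and>
     (\<forall>e\<in>E. \<exists>u v. e = {u, v} \<and> u \<noteq> v \<and> u \<in> V \<and> v \<in> V)"

definition connected_graph :: "'a set \<Rightarrow> 'a set set \<Rightarrow> bool" where
  "connected_graph V E \<longleftrightarrow> V \<noteq> {} \<and>
     (\<forall>u\<in>V. \<forall>v\<in>V. (u, v) \<in> ({(x, y). {x, y} \<in> E})\<^sup>*)"

text \<open>Vectors in R^|V| are represented with coordinates indexed by V itself.\<close>
definition vnorm2 :: "'a set \<Rightarrow> ('a \<Rightarrow> real) \<Rightarrow> real" where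
  "vnorm2 V x = (\<Sum>i\<in>V. (x i)\<^sup>2)"

definition vnorm :: "'a set \<Rightarrow> ('a \<Rightarrow> real) \<Rightarrow> real" where
  "vnorm V x = sqrt (vnorm2 V x)"

definition total_mass :: "'a set \<Rightarrow> ('a \<Rightarrow> real) \<Rightarrow> real" where
  "total_mass V m0 = (\<Sum>u\<in>V. m0 u)"

definition Dsq :: "'a set set \<Rightarrow> ('a set \<Rightarrow> real) \<Rightarrow> real" where
  "Dsq E d = (\<Sum>e\<in>E. (d e)\<^sup>2)"

definition bary :: "'a set \<Rightarrow> ('a \<Rightarrow> real) \<Rightarrow> ('a \<Rightarrow> 'a \<Rightarrow> real) \<Rightarrow> ('a \<Rightarrow> real)" where
  "bary V m0 \<phi> = (\<lambda>i. (1 / total_mass V m0) * (\<Sum>u\<in>V. m0 u * \<phi> u i))"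

definition admissible_map ::
  "'a set \<Rightarrow> 'a set set \<Rightarrow> ('a \<Rightarrow> real) \<Rightarrow> ('a set \<Rightarrow> real) \<Rightarrow> ('a \<Rightarrow> 'a \<Rightarrow> real) \<Rightarrow> bool" where
  "admissible_map V E m0 d \<phi> \<longleftrightarrow>
     (\<Sum>u\<in>V. m0 u * vnorm2 V (\<phi> u)) = total_mass V m0 \<and>
     (\<forall>u v. {u, v} \<in> E \<longrightarrow> vnorm V (\<lambda>i. \<phi> u i - \<phi> v i) \<le> d {u, v})"

definition delta_inv ::
  "'a set \<Rightarrow> 'a set set \<Rightarrow> ('a \<Rightarrow> real) \<Rightarrow> ('a set \<Rightarrow> real) \<Rightarrow> real" where
  "delta_inv V E m0 d = Inf {vnorm2 V (bary V m0 \<phi>) | \<phi>. admissible_map V E m0 d \<phi>}"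

text \<open>Rayleigh quotient characterisation of the first positive Laplacian eigenvalue.
  The edge sum over unordered edges is written as half the sum over ordered pairs.\<close>
definition edge_energy :: "'a set \<Rightarrow> 'a set set \<Rightarrow> ('a set \<Rightarrow> real) \<Rightarrow> ('a \<Rightarrow> real) \<Rightarrow> real" where
  "edge_energy V E m1 f =
     (1/2) * (\<Sum>u\<in>V. \<Sum>v\<in>V. if {u, v} \<in> E then m1 {u, v} * (f u - f v)\<^sup>2 else 0)"

definition mean_val :: "'a set \<Rightarrow> ('a \<Rightarrow> real) \<Rightarrow> ('a \<Rightarrow> real) \<Rightarrow> real" where
  "mean_val V m0 f = (1 / total_mass V m0) * (\<Sum>u\<in>V. m0 u * f u)"

definition lambda1 ::
  "'a set \<Rightarrow> 'a set set \<Rightarrow> ('a \<Rightarrow> real) \<Rightarrow> ('a set \<Rightarrow> real) \<Rightarrow> real" where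
  "lambda1 V E m0 m1 = Inf {edge_energy V E m1 f /
        (\<Sum>u\<in>V. m0 u * (f u - mean_val V m0 f)\<^sup>2) | f.
        \<exists>u\<in>V. \<exists>v\<in>V. f u \<noteq> f v}"

definition admissible_edge_weight ::
  "'a set \<Rightarrow> 'a set set \<Rightarrow> ('a set \<Rightarrow> real) \<Rightarrow> ('a set \<Rightarrow> real) \<Rightarrow> bool" where
  "admissible_edge_weight V E d m1 \<longleftrightarrow>
     (\<forall>e\<in>E. m1 e \<ge> 0) \<and>
     connected_graph V {e\<in>E. m1 e > 0} \<and>
     (\<Sum>e\<in>E. m1 e * (d e)\<^sup>2) = Dsq E d"

definition sigma_inv ::
  "'a set \<Rightarrow> 'a set set \<Rightarrow> ('a \<Rightarrow> real) \<Rightarrow> ('a set \<Rightarrow> real) \<Rightarrow> real" where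
  "sigma_inv V E m0 d = Sup {lambda1 V E m0 m1 | m1. admissible_edge_weight V E d m1}"

end

theory Submission
  imports Defs
begin
lemma edge_sum:
  assumes "simple_graph V E"
  shows "(\<Sum>u\<in>V. \<Sum>v\<in>V. if {u,v}\<in>E then h {u,v} else (0::real)) = 2 * (\<Sum>e\<in>E. h e)"
proof -
  have fV: "finite V" using assms by (simp add: simple_graph_def)
  have EV: "E \<subseteq> Pow V" using assms unfolding simple_graph_def by fastforce
  have fE: "finite E" using fV EV by (meson finite_Pow_iff finite_subset)
  let ?P = "{p\<in>V\<times>V. {fst p, snd p} \<in> E}"
  have "(\<Sum>u\<in>V. \<Sum>v\<in>V. if {u,v}\<in>E then h {u,v} else (0::real))
      = (\<Sum>p\<in>V\<times>V. if {fst p, snd p}\<in>E then h {fst p, snd p} else 0)"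
    by (simp add: sum.cartesian_product split_def)
  also have "\<dots> = (\<Sum>p\<in>?P. h {fst p, snd p})"
    using fV by (simp add: sum.inter_filter)
  also have "\<dots> = (\<Sum>e\<in>E. \<Sum>p\<in>{p. p\<in>?P \<and> {fst p, snd p} = e}. h {fst p, snd p})"
    by (rule sum.group[symmetric]) (use fV fE in auto)
  also have "\<dots> = (\<Sum>e\<in>E. 2 * h e)"
  proof (rule sum.cong[OF refl])
    fix e assume "e \<in> E"
    then obtain a b where ab: "e = {a,b}" "a \<noteq> b" "a \<in> V" "b \<in> V"
      using assms unfolding simple_graph_def by fastforce
    have "{p. p\<in>?P \<and> {fst p, snd p} = e} = {(a,b),(b,a)}"
    proof (rule set_eqI)
      fix p :: "'a \<times> 'a"
      obtain x y where p: "p = (x,y)" by (cases p)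
      have "{x,y} = {a,b} \<longleftrightarrow> (x=a \<and> y=b) \<or> (x=b \<and> y=a)" by (rule doubleton_eq_iff)
      then show "p \<in> {p. p\<in>?P \<and> {fst p, snd p} = e} \<longleftrightarrow> p \<in> {(a,b),(b,a)}"
        using ab \<open>e\<in>E\<close> p by (auto simp: insert_commute)
    qed
    then show "(\<Sum>p\<in>{p. p\<in>?P \<and> {fst p, snd p} = e}. h {fst p, snd p}) = 2 * h e"
      using ab by (simp add: insert_commute[of b a])
  qed
  finally show ?thesis by (simp add: sum_distrib_left)
qed

lemma two_fun:
  fixes h g :: "'c \<Rightarrow> real"
  assumes mix: "\<And>x z s. x\<in>C \<Longrightarrow> z\<in>C \<Longrightarrow> 0\<le>s \<Longrightarrow> s\<le>1 \<Longrightarrow>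
      \<exists>w\<in>C. h w = s*h x + (1-s)*h z \<and> g w = s*g x + (1-s)*g z"
  and cov: "\<And>x. x\<in>C \<Longrightarrow> h x \<ge> 0 \<or> g x \<ge> 0"
  shows "\<exists>t. 0\<le>t \<and> t\<le>1 \<and> (\<forall>x\<in>C. t*h x + (1-t)*g x \<ge> 0)"
proof (cases "\<forall>x\<in>C. g x \<ge> 0")
  case True
  then show ?thesis by (intro exI[of _ 0]) auto
next
  case False
  define B where "B = {x\<in>C. g x < 0}"
  define r where "r x = g x / (g x - h x)" for x
  have Bne: "B \<noteq> {}" using False B_def by auto
  have rB: "0 < r z \<and> r z \<le> 1" if "z \<in> B" for z
  proof -
    have z: "z \<in> C" "g z < 0" using that B_def by auto
    then have "h z \<ge> 0" using cov by force
    then show ?thesis using z unfolding r_def by (auto simp: divide_simps)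
  qed
  have key: "r z \<le> r x" if x: "x \<in> C" "h x < 0" and z: "z \<in> B" for x z
  proof (rule ccontr)
    assume nle: "\<not> r z \<le> r x"
    have zC: "z \<in> C" "g z < 0" using z B_def by auto
    have hz: "h z \<ge> 0" using cov zC by force
    have gx: "g x \<ge> 0" using cov x by force
    define a where "a = - h x"
    define b where "b = g x"
    define c where "c = h z"
    define e where "e = - g z"
    have pos: "a > 0" "b \<ge> 0" "c \<ge> 0" "e > 0" using x gx hz zC a_def b_def c_def e_def by auto
    have rx: "r x = b/(b+a)" unfolding r_def a_def b_def by simp
    have rz: "r z = e/(e+c)" unfolding r_def c_def e_def
      by (metis add.commute minus_diff_eq minus_divide_divide uminus_add_conv_diff)
    have "b/(b+a) < e/(e+c)" using nle rx rz by simp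
    then have ea: "b*c < e*a" using pos by (simp add: divide_simps) argo
    define s where "s = (c/(c+a) + e/(b+e))/2"
    have s1: "c/(c+a) < e/(b+e)" using ea pos by (simp add: divide_simps) argo
    have s2: "c/(c+a) < s" "s < e/(b+e)" using s1 s_def by auto
    have s3: "0 \<le> c/(c+a)" "e/(b+e) \<le> 1" using pos by (auto simp: divide_simps)
    have s01: "0 \<le> s" "s \<le> 1" using s2 s3 by auto
    obtain w where w: "w \<in> C" "h w = s*h x + (1-s)*h z" "g w = s*g x + (1-s)*g z"
      using mix[OF x(1) zC(1) s01] by blast
    have "c < s*(c+a)" using s2(1) pos by (simp add: divide_simps mult.commute)
    then have hw: "h w < 0" using w(2) a_def c_def by (simp add: algebra_simps)
    have "s*(b+e) < e" using s2(2) pos by (simp add: divide_simps mult.commute)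
    then have gw: "g w < 0" using w(3) b_def e_def by (simp add: algebra_simps)
    show False using cov[OF w(1)] hw gw by linarith
  qed
  define t where "t = Sup (r ` B)"
  have bdd: "bdd_above (r ` B)" using rB by (auto intro!: bdd_aboveI[of _ 1])
  have t1: "t \<le> 1" unfolding t_def using Bne rB by (auto intro!: cSup_least)
  have t0: "0 \<le> t"
  proof -
    obtain z where "z \<in> B" using Bne by auto
    then have "r z \<le> t" unfolding t_def using bdd by (auto intro: cSup_upper)
    then show ?thesis using rB[OF \<open>z\<in>B\<close>] by linarith
  qed
  have "t*h x + (1-t)*g x \<ge> 0" if x: "x \<in> C" for x
  proof (cases "g x < 0")
    case True
    then have xB: "x \<in> B" using x B_def by auto
    have hx: "h x \<ge> 0" using cov x True by force
    have "r x \<le> t" unfolding t_def using bdd xB by (auto intro: cSup_upper)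
    then have "r x * (h x - g x) \<le> t * (h x - g x)" using hx True by (intro mult_right_mono) auto
    moreover have "r x * (h x - g x) = - g x" unfolding r_def using hx True
      by (simp add: divide_simps) argo
    ultimately show ?thesis by (simp add: algebra_simps)
  next
    case False
    show ?thesis
    proof (cases "h x < 0")
      case True
      have "t \<le> r x" unfolding t_def using Bne key[OF x True] by (auto intro!: cSup_least)
      then have "t * (g x - h x) \<le> r x * (g x - h x)" using False True by (intro mult_right_mono) auto
      moreover have "r x * (g x - h x) = g x" unfolding r_def using False True by simp
      ultimately show ?thesis by (simp add: algebra_simps)
    next
      case hx: False
      then show ?thesis using False t0 t1 by simp
    qed
  qed
  then show ?thesis using t0 t1 by blast
qed

lemma fgh:
  fixes g :: "'i \<Rightarrow> 'c \<Rightarrow> real"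
  assumes "finite I" "I \<noteq> {}"
  and "\<And>x z s. x\<in>C \<Longrightarrow> z\<in>C \<Longrightarrow> 0\<le>s \<Longrightarrow> s\<le>1 \<Longrightarrow> \<exists>w\<in>C. \<forall>i\<in>I. g i w = s*g i x + (1-s)*g i z"
  and "\<And>x. x\<in>C \<Longrightarrow> \<exists>i\<in>I. g i x \<ge> 0"
  shows "\<exists>y. (\<forall>i\<in>I. y i \<ge> 0) \<and> sum y I = 1 \<and> (\<forall>x\<in>C. (\<Sum>i\<in>I. y i * g i x) \<ge> 0)"
  using assms
proof (induction I arbitrary: C rule: finite_ne_induct)
  case (singleton k)
  then show ?case by (intro exI[of _ "\<lambda>_. 1"]) auto
next
  case (insert k I)
  define C' where "C' = {x\<in>C. g k x < 0}"
  have mix': "\<exists>w\<in>C'. \<forall>i\<in>I. g i w = s*g i x + (1-s)*g i z"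
    if xzs: "x\<in>C'" "z\<in>C'" "0\<le>s" "s\<le>1" for x z s
  proof -
    have xz: "x \<in> C" "z \<in> C" "g k x < 0" "g k z < 0" using that C'_def by auto
    obtain w where w: "w\<in>C" "\<forall>i\<in>insert k I. g i w = s*g i x + (1-s)*g i z"
      using insert.prems(1)[OF xz(1,2) xzs(3,4)] by blast
    have "g k w = s*g k x + (1-s)*g k z" using w by auto
    also have "\<dots> < 0"
    proof (cases "s = 0")
      case True then show ?thesis using xz by simp
    next
      case False
      then have "s*g k x < 0" using xzs xz by (simp add: mult_pos_neg)
      moreover have "(1-s)*g k z \<le> 0" using xzs xz by (simp add: mult_nonneg_nonpos)
      ultimately show ?thesis by linarith
    qed
    finally show ?thesis using w C'_def by auto
  qed
  have cov': "\<exists>i\<in>I. g i x \<ge> 0" if "x\<in>C'" for x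
    using insert.prems(2)[of x] that C'_def by force
  obtain y' where y': "\<forall>i\<in>I. y' i \<ge> 0" "sum y' I = 1" "\<forall>x\<in>C'. (\<Sum>i\<in>I. y' i * g i x) \<ge> 0"
    using insert.IH[OF mix' cov'] by blast
  define h where "h x = (\<Sum>i\<in>I. y' i * g i x)" for x
  have mixh: "\<exists>w\<in>C. h w = s*h x + (1-s)*h z \<and> g k w = s*g k x + (1-s)*g k z"
    if xzs2: "x\<in>C" "z\<in>C" "0\<le>s" "s\<le>1" for x z s
  proof -
    obtain w where w: "w\<in>C" "\<forall>i\<in>insert k I. g i w = s*g i x + (1-s)*g i z"
      using insert.prems(1)[OF xzs2] by blast
    have "h w = (\<Sum>i\<in>I. y' i * (s*g i x + (1-s)*g i z))" unfolding h_def using w by auto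
    also have "\<dots> = (\<Sum>i\<in>I. s*(y' i * g i x) + (1-s)*(y' i * g i z))"
      by (simp add: algebra_simps)
    also have "\<dots> = s*h x + (1-s)*h z" unfolding h_def
      by (simp only: sum.distrib sum_distrib_left)
    finally show ?thesis using w by auto
  qed
  have covh: "h x \<ge> 0 \<or> g k x \<ge> 0" if "x\<in>C" for x
    using y'(3) that C'_def h_def by force
  obtain t where t: "0\<le>t" "t\<le>1" "\<forall>x\<in>C. t*h x + (1-t)*g k x \<ge> 0"
    using two_fun[of C h "g k", OF mixh covh] by blast
  define y where "y i = (if i = k then 1 - t else t * y' i)" for i
  have s1: "(\<Sum>i\<in>I. y i * G i) = t * (\<Sum>i\<in>I. y' i * G i)" for G :: "'i \<Rightarrow> real"
  proof -
    have "(\<Sum>i\<in>I. y i * G i) = (\<Sum>i\<in>I. t*(y' i * G i))"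
    proof (rule sum.cong[OF refl])
      fix i assume "i \<in> I"
      then have "i \<noteq> k" using insert.hyps by auto
      then show "y i * G i = t*(y' i * G i)" by (simp add: y_def)
    qed
    then show ?thesis by (simp add: sum_distrib_left)
  qed
  have "sum y (insert k I) = (1 - t) + t * sum y' I"
    using s1[of "\<lambda>_. 1"] insert.hyps by (simp add: y_def)
  then have "sum y (insert k I) = 1" using y'(2) by simp
  moreover have "\<forall>i\<in>insert k I. y i \<ge> 0" using t y'(1) y_def by auto
  moreover have "\<forall>x\<in>C. (\<Sum>i\<in>insert k I. y i * g i x) \<ge> 0"
  proof
    fix x assume "x \<in> C"
    have "(\<Sum>i\<in>insert k I. y i * g i x) = (1-t) * g k x + t * h x"
      using s1[of "\<lambda>i. g i x"] insert.hyps h_def by (simp add: y_def)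
    then show "(\<Sum>i\<in>insert k I. y i * g i x) \<ge> 0" using t(3) \<open>x\<in>C\<close> by (simp add: add.commute)
  qed
  ultimately show ?case by blast
qed

lemma dep:
  fixes F :: "nat \<Rightarrow> 'a \<Rightarrow> real"
  assumes "finite W" "finite J" "card W < card J"
  shows "\<exists>p\<in>J. \<exists>a. \<forall>u\<in>W. F p u = (\<Sum>j\<in>J-{p}. a j * F j u)"
  using assms
proof (induction W arbitrary: J F rule: finite_induct)
  case empty
  then obtain p where "p \<in> J" by fastforce
  then show ?case by (intro bexI[of _ p] exI[of _ "\<lambda>_. 0"]) auto
next
  case (insert w W0)
  have cW: "card (insert w W0) = Suc (card W0)" using insert.hyps by simp
  show ?case
  proof (cases "\<forall>j\<in>J. F j w = 0")
    case True
    obtain p a where pa: "p \<in> J" "\<forall>u\<in>W0. F p u = (\<Sum>j\<in>J-{p}. a j * F j u)"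
      using insert.IH[of J F] insert.prems cW by auto
    have "F p w = (\<Sum>j\<in>J-{p}. a j * F j w)" using True pa(1) by simp
    then show ?thesis using pa by auto
  next
    case False
    then obtain q where q: "q \<in> J" "F q w \<noteq> 0" by blast
    define J' where "J' = J - {q}"
    define F' where "F' j u = F j u - F j w / F q w * F q u" for j u
    have fJ': "finite J'" using insert.prems J'_def by simp
    have cJ': "card W0 < card J'" using insert.prems cW q(1) J'_def by simp
    obtain p a where pa: "p \<in> J'" "\<forall>u\<in>W0. F' p u = (\<Sum>j\<in>J'-{p}. a j * F' j u)"
      using insert.IH[OF fJ' cJ', of F'] by blast
    define c where "c = (F p w - (\<Sum>j\<in>J'-{p}. a j * F j w)) / F q w"
    define a' where "a' j = (if j = q then c else a j)" for j
    have pJ: "p \<in> J" "p \<noteq> q" using pa(1) J'_def by auto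
    have Jp: "J - {p} = insert q (J' - {p})" using pJ q(1) J'_def by auto
    have qn: "q \<notin> J' - {p}" using J'_def by auto
    have sumeq: "(\<Sum>j\<in>J-{p}. a' j * F j u) = c * F q u + (\<Sum>j\<in>J'-{p}. a j * F j u)" for u
    proof -
      have "(\<Sum>j\<in>J-{p}. a' j * F j u) = a' q * F q u + (\<Sum>j\<in>J'-{p}. a' j * F j u)"
        unfolding Jp using fJ' qn by (simp add: sum.insert)
      also have "(\<Sum>j\<in>J'-{p}. a' j * F j u) = (\<Sum>j\<in>J'-{p}. a j * F j u)"
        by (rule sum.cong[OF refl]) (use qn in \<open>auto simp: a'_def\<close>)
      finally show ?thesis by (simp add: a'_def)
    qed
    have "F p u = (\<Sum>j\<in>J-{p}. a' j * F j u)" if u: "u \<in> insert w W0" for u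
    proof (cases "u = w")
      case True
      then show ?thesis unfolding sumeq c_def using q(2) by simp
    next
      case False
      then have uW: "u \<in> W0" using u by simp
      have "F p u - F p w / F q w * F q u = (\<Sum>j\<in>J'-{p}. a j * (F j u - F j w / F q w * F q u))"
        using pa(2) uW unfolding F'_def by simp
      also have "\<dots> = (\<Sum>j\<in>J'-{p}. a j * F j u) - (\<Sum>j\<in>J'-{p}. a j * F j w) / F q w * F q u"
        by (simp add: algebra_simps sum_subtractf sum_distrib_left sum_divide_distrib)
      finally have "F p u = (\<Sum>j\<in>J'-{p}. a j * F j u) + c * F q u"
        unfolding c_def by (simp add: algebra_simps diff_divide_distrib)
      then show ?thesis unfolding sumeq by simp
    qed
    then show ?thesis using pJ(1) by blast
  qed
qed

definition kern :: "nat set \<Rightarrow> (nat \<Rightarrow> 'a \<Rightarrow> real) \<Rightarrow> 'a \<Rightarrow> 'a \<Rightarrow> real" where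
  "kern J F u v = (\<Sum>j\<in>J. F j u * F j v)"

definition centered :: "'a set \<Rightarrow> ('a \<Rightarrow> real) \<Rightarrow> nat set \<Rightarrow> (nat \<Rightarrow> 'a \<Rightarrow> real) \<Rightarrow> bool" where
  "centered V m0 J F \<longleftrightarrow> (\<forall>j\<in>J. (\<Sum>u\<in>V. m0 u * F j u) = 0)"

lemma beta_eq:
  fixes A :: real assumes "A \<ge> 0"
  shows "2 * (1 / (1 + sqrt (1 + A))) + (1 / (1 + sqrt (1 + A)))^2 * A = 1"
proof -
  define r where "r = sqrt (1 + A)"
  have r: "r \<ge> 0" "r^2 = 1 + A" using assms r_def by auto
  have "A = (r - 1) * (r + 1)" using r by (simp add: algebra_simps power2_eq_square)
  then have "2 * (1 / (1 + r)) + (1 / (1 + r))^2 * A = 2 / (1+r) + (r - 1)/(1+r)"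
    using r by (simp add: power2_eq_square divide_simps)
  also have "\<dots> = 1" using r by (simp add: divide_simps) (simp add: algebra_simps)
  finally show ?thesis unfolding r_def .
qed

lemma reduce_step:
  fixes F :: "nat \<Rightarrow> 'a \<Rightarrow> real"
  assumes fV: "finite V" and w0: "w0 \<in> V" and m0: "\<forall>u\<in>V. m0 u > 0"
    and fJ: "finite J" and cen: "centered V m0 J F" and big: "card V \<le> card J"
  shows "\<exists>p\<in>J. \<exists>G. centered V m0 (J-{p}) G \<and> (\<forall>u\<in>V. \<forall>v\<in>V. kern (J-{p}) G u v = kern J F u v)"
proof -
  have "card (V - {w0}) < card J" using big w0 fV
    by (metis card_Diff1_less_iff finite_Diff less_le_trans order.strict_iff_not)
  then obtain p a where pa: "p \<in> J" "\<forall>u\<in>V-{w0}. F p u = (\<Sum>j\<in>J-{p}. a j * F j u)"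
    using dep[of "V - {w0}" J F] fV fJ by blast
  have cj: "m0 w0 * F j w0 = - (\<Sum>u\<in>V-{w0}. m0 u * F j u)" if "j \<in> J" for j
  proof -
    have "(\<Sum>u\<in>V. m0 u * F j u) = 0" using cen that unfolding centered_def by blast
    then show ?thesis using sum.remove[OF fV w0, of "\<lambda>u. m0 u * F j u"] by linarith
  qed
  have "m0 w0 * (\<Sum>j\<in>J-{p}. a j * F j w0) = (\<Sum>j\<in>J-{p}. a j * (m0 w0 * F j w0))"
    by (simp add: sum_distrib_left algebra_simps)
  also have "\<dots> = (\<Sum>j\<in>J-{p}. a j * (- (\<Sum>u\<in>V-{w0}. m0 u * F j u)))"
    by (rule sum.cong[OF refl]) (simp add: cj)
  also have "\<dots> = - (\<Sum>u\<in>V-{w0}. m0 u * (\<Sum>j\<in>J-{p}. a j * F j u))"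
    by (simp add: sum_distrib_left sum_negf algebra_simps sum.swap[of _ "J-{p}"])
  also have "\<dots> = - (\<Sum>u\<in>V-{w0}. m0 u * F p u)"
    using pa(2) by simp
  also have "\<dots> = m0 w0 * F p w0" using cj[OF pa(1)] by simp
  finally have "F p w0 = (\<Sum>j\<in>J-{p}. a j * F j w0)" using m0 w0 by force
  then have dp: "\<forall>u\<in>V. F p u = (\<Sum>j\<in>J-{p}. a j * F j u)" using pa(2) by (metis insert_Diff insert_iff w0)
  define A where "A = (\<Sum>j\<in>J-{p}. (a j)^2)"
  define \<beta> where "\<beta> = 1 / (1 + sqrt (1 + A))"
  have A0: "A \<ge> 0" unfolding A_def by (simp add: sum_nonneg)
  have be: "2 * \<beta> + \<beta>^2 * A = 1" using beta_eq[OF A0] \<beta>_def by simp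
  define G where "G j u = F j u + \<beta> * a j * F p u" for j u
  have "centered V m0 (J-{p}) G"
    unfolding centered_def
  proof
    fix j assume j: "j \<in> J - {p}"
    have "(\<Sum>u\<in>V. m0 u * G j u) = (\<Sum>u\<in>V. m0 u * F j u) + \<beta> * a j * (\<Sum>u\<in>V. m0 u * F p u)"
      unfolding G_def by (simp add: algebra_simps sum.distrib sum_distrib_left)
    then show "(\<Sum>u\<in>V. m0 u * G j u) = 0" using cen j pa(1) unfolding centered_def by simp
  qed
  moreover have "kern (J-{p}) G u v = kern J F u v" if uv: "u \<in> V" "v \<in> V" for u v
  proof -
    have "kern (J-{p}) G u v = (\<Sum>j\<in>J-{p}. F j u * F j v + \<beta> * F p v * (a j * F j u)
        + \<beta> * F p u * (a j * F j v) + \<beta>^2 * F p u * F p v * (a j)^2)"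
      unfolding kern_def G_def by (rule sum.cong[OF refl]) (simp add: algebra_simps power2_eq_square)
    also have "\<dots> = kern (J-{p}) F u v + \<beta> * F p v * F p u + \<beta> * F p u * F p v + \<beta>^2 * F p u * F p v * A"
      unfolding kern_def A_def using dp uv by (simp add: sum.distrib sum_distrib_left[symmetric])
    also have "\<dots> = kern (J-{p}) F u v + (2 * \<beta> + \<beta>^2 * A) * F p u * F p v"
      by (simp add: algebra_simps)
    also have "\<dots> = kern J F u v" using be unfolding kern_def
      using sum.remove[OF fJ pa(1), of "\<lambda>j. F j u * F j v"] by simp
    finally show ?thesis .
  qed
  ultimately show ?thesis using pa(1) by blast
qed

lemma reduce:
  fixes F :: "nat \<Rightarrow> 'a \<Rightarrow> real"
  assumes fV: "finite V" and w0: "w0 \<in> V" and m0: "\<forall>u\<in>V. m0 u > 0"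
  shows "finite J \<Longrightarrow> centered V m0 J F \<Longrightarrow> \<exists>J' G. finite J' \<and> card J' < card V \<and>
     centered V m0 J' G \<and> (\<forall>u\<in>V. \<forall>v\<in>V. kern J' G u v = kern J F u v)"
proof (induction "card J" arbitrary: J F rule: less_induct)
  case less
  show ?case
  proof (cases "card J < card V")
    case True then show ?thesis using less.prems by blast
  next
    case False
    then obtain p G where pG: "p \<in> J" "centered V m0 (J-{p}) G"
      "\<forall>u\<in>V. \<forall>v\<in>V. kern (J-{p}) G u v = kern J F u v"
      using reduce_step[OF fV w0 m0 less.prems] by force
    have "card (J - {p}) < card J" using card_Diff1_less[OF less.prems(1) pG(1)] .
    then obtain J' G' where "finite J'" "card J' < card V" "centered V m0 J' G'"
      "\<forall>u\<in>V. \<forall>v\<in>V. kern J' G' u v = kern (J-{p}) G u v"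
      using less.hyps[of "J - {p}" G] less.prems pG(2) by blast
    then show ?thesis using pG(3) by auto
  qed
qed

definition var1 :: "'a set \<Rightarrow> ('a \<Rightarrow> real) \<Rightarrow> ('a \<Rightarrow> real) \<Rightarrow> real" where
  "var1 V m0 f = (\<Sum>u\<in>V. m0 u * (f u - mean_val V m0 f)\<^sup>2)"

lemma mass_pos:
  assumes "finite V" "V \<noteq> {}" "\<forall>u\<in>V. m0 u > 0"
  shows "total_mass V m0 > 0"
  unfolding total_mass_def using assms by (simp add: sum_pos)

lemma sum_m0_f:
  assumes "total_mass V m0 > 0"
  shows "(\<Sum>u\<in>V. m0 u * f u) = total_mass V m0 * mean_val V m0 f"
  using assms unfolding mean_val_def by simp

lemma var_shift:
  assumes "total_mass V m0 > 0"
  shows "(\<Sum>u\<in>V. m0 u * (f u - c)\<^sup>2) = var1 V m0 f + total_mass V m0 * (mean_val V m0 f - c)\<^sup>2"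
proof -
  define \<mu> where "\<mu> = mean_val V m0 f"
  define M where "M = total_mass V m0"
  have s: "(\<Sum>u\<in>V. m0 u * f u) = M * \<mu>" using sum_m0_f[OF assms] M_def \<mu>_def by simp
  have Mdef: "M = (\<Sum>u\<in>V. m0 u)" using M_def total_mass_def by simp
  have "(\<Sum>u\<in>V. m0 u * (f u - c)\<^sup>2) = (\<Sum>u\<in>V. m0 u * (f u - \<mu>)\<^sup>2 + 2 * (\<mu> - c) * (m0 u * f u) - (\<mu>^2 - c^2) * m0 u)"
    by (rule sum.cong[OF refl]) (simp add: power2_eq_square algebra_simps)
  also have "\<dots> = var1 V m0 f + 2 * (\<mu> - c) * (\<Sum>u\<in>V. m0 u * f u) - (\<mu>^2 - c^2) * (\<Sum>u\<in>V. m0 u)"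
    unfolding var1_def \<mu>_def
    by (simp add: sum.distrib sum_subtractf sum_distrib_left)
  also have "\<dots> = var1 V m0 f + 2 * (\<mu> - c) * (M * \<mu>) - (\<mu>^2 - c^2) * M"
    unfolding s Mdef[symmetric] ..
  also have "\<dots> = var1 V m0 f + M * (\<mu> - c)\<^sup>2" by (simp add: power2_eq_square algebra_simps)
  finally show ?thesis unfolding M_def \<mu>_def .
qed

lemma var_nonneg:
  assumes "\<forall>u\<in>V. m0 u > 0"
  shows "var1 V m0 f \<ge> 0"
  unfolding var1_def using assms by (auto intro!: sum_nonneg)

lemma var_le:
  assumes "total_mass V m0 > 0"
  shows "var1 V m0 f \<le> (\<Sum>u\<in>V. m0 u * (f u - c)\<^sup>2)"
  using var_shift[OF assms, of f c] assms by (simp add: mult_nonneg_nonneg)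

lemma var_centered:
  assumes "total_mass V m0 > 0" "(\<Sum>u\<in>V. m0 u * f u) = 0"
  shows "var1 V m0 f = (\<Sum>u\<in>V. m0 u * (f u)\<^sup>2)"
proof -
  have "mean_val V m0 f = 0" using assms unfolding mean_val_def by simp
  then show ?thesis using var_shift[OF assms(1), of f 0] by simp
qed

lemma var_pos:
  assumes "finite V" "\<forall>u\<in>V. m0 u > 0" "u \<in> V" "v \<in> V" "f u \<noteq> f v"
  shows "var1 V m0 f > 0"
proof (rule ccontr)
  assume "\<not> var1 V m0 f > 0"
  then have z: "(\<Sum>x\<in>V. m0 x * (f x - mean_val V m0 f)\<^sup>2) = 0"
    using var_nonneg[OF assms(2), of f] unfolding var1_def by linarith
  have nn: "\<And>x. x \<in> V \<Longrightarrow> 0 \<le> m0 x * (f x - mean_val V m0 f)\<^sup>2"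
    using assms(2) by (simp add: less_imp_le)
  have "\<forall>x\<in>V. m0 x * (f x - mean_val V m0 f)\<^sup>2 = 0"
    using sum_nonneg_eq_0_iff[OF assms(1), of "\<lambda>x. m0 x * (f x - mean_val V m0 f)\<^sup>2"] nn z by blast
  then have "\<forall>x\<in>V. f x = mean_val V m0 f" using assms(2) by (metis less_irrefl mult_eq_0_iff power_eq_0_iff right_minus_eq)
  then show False using assms(3-5) by auto
qed

lemma var_scale:
  "var1 V m0 (\<lambda>u. c * f u) = c\<^sup>2 * var1 V m0 f"
proof -
  have "mean_val V m0 (\<lambda>u. c * f u) = c * mean_val V m0 f"
    unfolding mean_val_def by (simp add: sum_distrib_left algebra_simps)
  then show ?thesis unfolding var1_def
    by (simp add: sum_distrib_left power2_eq_square algebra_simps)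
qed

lemma var_shift_inv:
  assumes "total_mass V m0 > 0"
  shows "var1 V m0 (\<lambda>u. f u - c) = var1 V m0 f"
proof -
  have "mean_val V m0 (\<lambda>u. f u - c) = mean_val V m0 f - c"
    using assms unfolding mean_val_def total_mass_def
    by (simp add: sum_subtractf sum_distrib_left[symmetric] algebra_simps)
  then show ?thesis unfolding var1_def by simp
qed

definition ends :: "'a set \<Rightarrow> 'a \<times> 'a" where
  "ends e = (SOME p. e = {fst p, snd p})"

lemma ends_eq: "{u,v} = {fst (ends {u,v}), snd (ends {u,v})}"
  unfolding ends_def by (rule someI[of _ "(u,v)"]) simp

lemma ends_sq: "((f::'a \<Rightarrow> real) (fst (ends {u,v})) - f (snd (ends {u,v})))\<^sup>2 = (f u - f v)\<^sup>2"
proof -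
  have "{u,v} = {fst (ends {u,v}), snd (ends {u,v})}" by (rule ends_eq)
  then have "(fst (ends {u,v}) = u \<and> snd (ends {u,v}) = v) \<or> (fst (ends {u,v}) = v \<and> snd (ends {u,v}) = u)"
    by (metis doubleton_eq_iff)
  then show ?thesis
  proof
    assume "fst (ends {u,v}) = u \<and> snd (ends {u,v}) = v" then show ?thesis by simp
  next
    assume "fst (ends {u,v}) = v \<and> snd (ends {u,v}) = u"
    then have "(f (fst (ends {u,v})) - f (snd (ends {u,v})))\<^sup>2 = (f v - f u)\<^sup>2" by simp
    also have "\<dots> = (f u - f v)\<^sup>2" by (simp add: power2_eq_square algebra_simps)
    finally show ?thesis .
  qed
qed

lemma ends_in:
  assumes "simple_graph V E" "e \<in> E"
  shows "fst (ends e) \<in> V \<and> snd (ends e) \<in> V \<and> e = {fst (ends e), snd (ends e)}"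
proof -
  obtain u v where uv: "e = {u,v}" "u \<in> V" "v \<in> V" using assms unfolding simple_graph_def by meson
  have "{u,v} = {fst (ends {u,v}), snd (ends {u,v})}" by (rule ends_eq)
  then show ?thesis using uv by (metis doubleton_eq_iff)
qed

lemma energy_edges:
  assumes "simple_graph V E"
  shows "edge_energy V E m1 f = (\<Sum>e\<in>E. m1 e * (f (fst (ends e)) - f (snd (ends e)))\<^sup>2)"
proof -
  define h where "h e = m1 e * (f (fst (ends e)) - f (snd (ends e)))\<^sup>2" for e
  have "edge_energy V E m1 f = (1/2) * (\<Sum>u\<in>V. \<Sum>v\<in>V. if {u,v}\<in>E then h {u,v} else 0)"
    unfolding edge_energy_def h_def
    by (intro arg_cong[where f="\<lambda>x. (1/2) * x"] sum.cong refl) (simp add: ends_sq[of f])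
  also have "\<dots> = (\<Sum>e\<in>E. h e)" using edge_sum[OF assms, of h] by simp
  finally show ?thesis unfolding h_def .
qed

lemma energy_nonneg:
  assumes "simple_graph V E" "\<forall>e\<in>E. m1 e \<ge> 0"
  shows "edge_energy V E m1 f \<ge> 0"
  unfolding energy_edges[OF assms(1)] using assms(2) by (auto intro!: sum_nonneg)

lemma lambda_le:
  assumes sg: "simple_graph V E" and m0: "\<forall>u\<in>V. m0 u > 0" and m1: "\<forall>e\<in>E. m1 e \<ge> 0"
    and uv: "u \<in> V" "v \<in> V" "f u \<noteq> f v"
  shows "lambda1 V E m0 m1 \<le> edge_energy V E m1 f / var1 V m0 f"
  unfolding lambda1_def
proof (rule cInf_lower)
  show "edge_energy V E m1 f / var1 V m0 f \<in> {edge_energy V E m1 f /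
        (\<Sum>u\<in>V. m0 u * (f u - mean_val V m0 f)\<^sup>2) | f. \<exists>u\<in>V. \<exists>v\<in>V. f u \<noteq> f v}"
    using uv unfolding var1_def by blast
  show "bdd_below {edge_energy V E m1 f / (\<Sum>u\<in>V. m0 u * (f u - mean_val V m0 f)\<^sup>2) |f.
      \<exists>u\<in>V. \<exists>v\<in>V. f u \<noteq> f v}"
  proof (rule bdd_belowI[of _ 0])
    fix x assume "x \<in> {edge_energy V E m1 f / (\<Sum>u\<in>V. m0 u * (f u - mean_val V m0 f)\<^sup>2) |f.
      \<exists>u\<in>V. \<exists>v\<in>V. f u \<noteq> f v}"
    then obtain g where "x = edge_energy V E m1 g / var1 V m0 g" unfolding var1_def by blast
    then show "0 \<le> x" using energy_nonneg[OF sg m1, of g] var_nonneg[OF m0, of g] by simp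
  qed
qed

lemma lambda_ge:
  assumes fV: "finite V" and m0: "\<forall>u\<in>V. m0 u > 0"
    and uv: "u \<in> V" "v \<in> V" "u \<noteq> v"
    and H: "\<And>f. c * var1 V m0 f \<le> edge_energy V E m1 f"
  shows "c \<le> lambda1 V E m0 m1"
  unfolding lambda1_def
proof (rule cInf_greatest)
  let ?f = "\<lambda>x. if x = u then 1 else (0::real)"
  show "{edge_energy V E m1 f / (\<Sum>u\<in>V. m0 u * (f u - mean_val V m0 f)\<^sup>2) |f.
      \<exists>u\<in>V. \<exists>v\<in>V. f u \<noteq> f v} \<noteq> {}"
  proof -
    have "?f u \<noteq> ?f v" using uv by simp
    then have "edge_energy V E m1 ?f / (\<Sum>x\<in>V. m0 x * (?f x - mean_val V m0 ?f)\<^sup>2) \<in> {edge_energy V E m1 f / (\<Sum>u\<in>V. m0 u * (f u - mean_val V m0 f)\<^sup>2) |f.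
      \<exists>u\<in>V. \<exists>v\<in>V. f u \<noteq> f v}" using uv(1,2) by blast
    then show ?thesis by blast
  qed
  fix x assume "x \<in> {edge_energy V E m1 f / (\<Sum>u\<in>V. m0 u * (f u - mean_val V m0 f)\<^sup>2) |f.
      \<exists>u\<in>V. \<exists>v\<in>V. f u \<noteq> f v}"
  then obtain g a b where g: "x = edge_energy V E m1 g / var1 V m0 g" "a \<in> V" "b \<in> V" "g a \<noteq> g b"
    unfolding var1_def by blast
  have "var1 V m0 g > 0" using var_pos[OF fV m0 g(2,3,4)] .
  then show "c \<le> x" using H[of g] g(1) by (simp add: pos_le_divide_eq)
qed

lemma vnorm_le_sq:
  fixes r :: real
  assumes "vnorm V x \<le> r"
  shows "vnorm2 V x \<le> r\<^sup>2"
proof -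
  have n: "vnorm2 V x \<ge> 0" unfolding vnorm2_def by (simp add: sum_nonneg)
  have "sqrt (vnorm2 V x) \<le> r" using assms unfolding vnorm_def by simp
  then have "(sqrt (vnorm2 V x))\<^sup>2 \<le> r\<^sup>2" using n by (intro power_mono) auto
  then show ?thesis using n by simp
qed

lemma weak:
  assumes sg: "simple_graph V E" and m0: "\<forall>u\<in>V. m0 u > 0" and Vne: "V \<noteq> {}"
    and phi: "admissible_map V E m0 d \<phi>" and m1: "admissible_edge_weight V E d m1"
  shows "lambda1 V E m0 m1 * (total_mass V m0 - total_mass V m0 * vnorm2 V (bary V m0 \<phi>)) \<le> Dsq E d"
proof -
  have fV: "finite V" using sg by (simp add: simple_graph_def)
  define M where "M = total_mass V m0"
  have Mp: "M > 0" using mass_pos[OF fV Vne m0] M_def by simp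
  have m1n: "\<forall>e\<in>E. m1 e \<ge> 0" using m1 admissible_edge_weight_def by blast
  define l where "l = lambda1 V E m0 m1"
  have a: "l * var1 V m0 (\<lambda>u. \<phi> u i) \<le> edge_energy V E m1 (\<lambda>u. \<phi> u i)" for i
  proof (cases "\<exists>u\<in>V. \<exists>v\<in>V. \<phi> u i \<noteq> \<phi> v i")
    case True
    then obtain u v where uv: "u \<in> V" "v \<in> V" "\<phi> u i \<noteq> \<phi> v i" by blast
    have vp: "var1 V m0 (\<lambda>u. \<phi> u i) > 0" using var_pos[OF fV m0 uv] .
    have "l \<le> edge_energy V E m1 (\<lambda>u. \<phi> u i) / var1 V m0 (\<lambda>u. \<phi> u i)"
      unfolding l_def using lambda_le[OF sg m0 m1n uv] .
    then show ?thesis using vp by (simp add: pos_le_divide_eq)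
  next
    case False
    then obtain c where c: "\<forall>u\<in>V. \<phi> u i = c" using Vne by (metis ex_in_conv)
    have "var1 V m0 (\<lambda>u. \<phi> u i) \<le> (\<Sum>u\<in>V. m0 u * (\<phi> u i - c)\<^sup>2)"
      using var_le[of V m0] Mp M_def by simp
    also have "\<dots> = 0" using c by simp
    finally have "var1 V m0 (\<lambda>u. \<phi> u i) = 0" using var_nonneg[OF m0] by (meson order_antisym)
    then show ?thesis using energy_nonneg[OF sg m1n] by simp
  qed
  have bm: "bary V m0 \<phi> i = mean_val V m0 (\<lambda>u. \<phi> u i)" for i
    unfolding bary_def mean_val_def by simp
  have b: "(\<Sum>i\<in>V. var1 V m0 (\<lambda>u. \<phi> u i)) = M - M * vnorm2 V (bary V m0 \<phi>)"
  proof -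
    have vi: "var1 V m0 (\<lambda>u. \<phi> u i) = (\<Sum>u\<in>V. m0 u * (\<phi> u i)\<^sup>2) - M * (bary V m0 \<phi> i)\<^sup>2" for i
      using var_shift[of V m0 "\<lambda>u. \<phi> u i" 0] Mp M_def bm by simp
    have "(\<Sum>i\<in>V. \<Sum>u\<in>V. m0 u * (\<phi> u i)\<^sup>2) = (\<Sum>u\<in>V. m0 u * vnorm2 V (\<phi> u))"
      unfolding vnorm2_def sum_distrib_left by (rule sum.swap)
    also have "\<dots> = M" using phi unfolding admissible_map_def M_def by (elim conjE)
    finally have "(\<Sum>i\<in>V. \<Sum>u\<in>V. m0 u * (\<phi> u i)\<^sup>2) = M" .
    then show ?thesis unfolding vi sum_subtractf vnorm2_def sum_distrib_left[symmetric] by simp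
  qed
  have c: "(\<Sum>i\<in>V. edge_energy V E m1 (\<lambda>u. \<phi> u i)) \<le> Dsq E d"
  proof -
    have "(\<Sum>i\<in>V. edge_energy V E m1 (\<lambda>u. \<phi> u i))
        = (\<Sum>e\<in>E. m1 e * vnorm2 V (\<lambda>i. \<phi> (fst (ends e)) i - \<phi> (snd (ends e)) i))"
      unfolding energy_edges[OF sg] vnorm2_def sum_distrib_left by (rule sum.swap)
    also have "\<dots> \<le> (\<Sum>e\<in>E. m1 e * (d e)\<^sup>2)"
    proof (rule sum_mono)
      fix e assume e: "e \<in> E"
      have ee: "e = {fst (ends e), snd (ends e)}" using ends_in[OF sg e] by blast
      have all: "\<forall>u v. {u, v} \<in> E \<longrightarrow> vnorm V (\<lambda>i. \<phi> u i - \<phi> v i) \<le> d {u, v}"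
        using phi unfolding admissible_map_def by (elim conjE)
      have "vnorm V (\<lambda>i. \<phi> (fst (ends e)) i - \<phi> (snd (ends e)) i) \<le> d {fst (ends e), snd (ends e)}"
        using all e ee by metis
      then have "vnorm V (\<lambda>i. \<phi> (fst (ends e)) i - \<phi> (snd (ends e)) i) \<le> d e"
        using ee[symmetric] by simp
      then have "vnorm2 V (\<lambda>i. \<phi> (fst (ends e)) i - \<phi> (snd (ends e)) i) \<le> (d e)\<^sup>2"
        by (rule vnorm_le_sq)
      then show "m1 e * vnorm2 V (\<lambda>i. \<phi> (fst (ends e)) i - \<phi> (snd (ends e)) i) \<le> m1 e * (d e)\<^sup>2"
        using m1n e by (simp add: mult_left_mono)
    qed
    also have "\<dots> = Dsq E d" using m1 admissible_edge_weight_def by blast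
    finally show ?thesis .
  qed
  have "l * (M - M * vnorm2 V (bary V m0 \<phi>)) = (\<Sum>i\<in>V. l * var1 V m0 (\<lambda>u. \<phi> u i))"
    unfolding b[symmetric] by (simp add: sum_distrib_left)
  also have "\<dots> \<le> (\<Sum>i\<in>V. edge_energy V E m1 (\<lambda>u. \<phi> u i))" by (rule sum_mono) (rule a)
  also have "\<dots> \<le> Dsq E d" by (rule c)
  finally show ?thesis unfolding l_def M_def .
qed

lemma sg_finite: "simple_graph V E \<Longrightarrow> finite V"
  by (simp add: simple_graph_def)

lemma sg_finiteE: assumes "simple_graph V E" shows "finite E"
proof -
  have "E \<subseteq> Pow V" using assms unfolding simple_graph_def by fastforce
  then show ?thesis using sg_finite[OF assms] by (meson finite_Pow_iff finite_subset)
qed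

lemma sg_edge_in: assumes "simple_graph V E" "{x,y} \<in> E" shows "x \<in> V" "y \<in> V"
proof -
  obtain a b where "{x,y} = {a,b}" "a \<in> V" "b \<in> V" using assms unfolding simple_graph_def by meson
  then show "x \<in> V" "y \<in> V" by (metis doubleton_eq_iff)+
qed

lemma sg_noloop: assumes "simple_graph V E" "{x,y} \<in> E" shows "x \<noteq> y"
proof -
  obtain a b where "{x,y} = {a,b}" "a \<noteq> b" using assms unfolding simple_graph_def by meson
  then show ?thesis by (metis doubleton_eq_iff)
qed

lemma adm_one:
  assumes "connected_graph V E"
  shows "admissible_edge_weight V E d (\<lambda>_. 1)"
  unfolding admissible_edge_weight_def Dsq_def using assms by simp

lemma E_nonempty:
  assumes "connected_graph V E" "u \<in> V" "v \<in> V" "u \<noteq> v"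
  shows "E \<noteq> {}"
proof
  assume "E = {}"
  then have "{(x, y). {x, y} \<in> E} = {}" by simp
  then have "(u,v) \<in> ({}::('a\<times>'a) set)\<^sup>*" using assms unfolding connected_graph_def by metis
  then show False using assms(4) by simp
qed

lemma Dsq_pos:
  assumes "simple_graph V E" "E \<noteq> {}" "\<forall>e\<in>E. d e > 0"
  shows "Dsq E d > 0"
  unfolding Dsq_def using assms sg_finiteE[OF assms(1)] by (intro sum_pos) auto

lemma edge_bound:
  fixes f :: "'a \<Rightarrow> real"
  assumes sg: "simple_graph V E" and e: "{z,y} \<in> E"
  shows "\<bar>f z - f y\<bar> \<le> sqrt (2 * edge_energy V E (\<lambda>_. 1) f)"
proof -
  have fV: "finite V" using sg_finite[OF sg] .
  have zy: "z \<in> V" "y \<in> V" using sg_edge_in[OF sg e] by auto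
  define T where "T u v = (if {u,v}\<in>E then 1 * (f u - f v)\<^sup>2 else (0::real))" for u v
  have T0: "T u v \<ge> 0" for u v unfolding T_def by simp
  have "(f z - f y)\<^sup>2 = T z y" using e T_def by simp
  also have "\<dots> \<le> (\<Sum>v\<in>V. T z v)" using zy fV T0 by (intro member_le_sum) auto
  also have "\<dots> \<le> (\<Sum>u\<in>V. \<Sum>v\<in>V. T u v)" using zy fV T0 by (intro member_le_sum sum_nonneg) auto
  also have "\<dots> = 2 * edge_energy V E (\<lambda>_. 1) f" unfolding edge_energy_def T_def by simp
  finally have "\<bar>f z - f y\<bar>\<^sup>2 \<le> 2 * edge_energy V E (\<lambda>_. 1) f" by simp
  then show ?thesis using real_le_rsqrt by blast
qed

lemma path_bound:
  fixes f :: "'a \<Rightarrow> real"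
  assumes sg: "simple_graph V E"
  shows "(x,y) \<in> {(a,b). {a,b} \<in> E} ^^ n \<Longrightarrow>
    \<bar>f x - f y\<bar> \<le> real n * sqrt (2 * edge_energy V E (\<lambda>_. 1) f)"
proof (induction n arbitrary: y)
  case 0
  then show ?case by simp
next
  case (Suc n)
  then obtain z where z: "(x,z) \<in> {(a,b). {a,b} \<in> E} ^^ n" "{z,y} \<in> E" by auto
  have "\<bar>f x - f y\<bar> \<le> \<bar>f x - f z\<bar> + \<bar>f z - f y\<bar>" by linarith
  also have "\<dots> \<le> real n * sqrt (2 * edge_energy V E (\<lambda>_. 1) f) + sqrt (2 * edge_energy V E (\<lambda>_. 1) f)"
    using Suc.IH[OF z(1)] edge_bound[OF sg z(2), of f] by linarith
  finally show ?case by (simp add: algebra_simps)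
qed

lemma lam_pos:
  assumes sg: "simple_graph V E" and cg: "connected_graph V E" and m0: "\<forall>u\<in>V. m0 u > 0"
    and uv: "u \<in> V" "v \<in> V" "u \<noteq> v"
  shows "lambda1 V E m0 (\<lambda>_. 1) > 0"
proof -
  have fV: "finite V" using sg_finite[OF sg] .
  define R where "R = {(a,b). {a,b} \<in> E}"
  define N where "N p = (SOME n. (fst p, snd p) \<in> R ^^ n)" for p
  have Np: "(x, y) \<in> R ^^ N (x,y)" if "x \<in> V" "y \<in> V" for x y
  proof -
    have "(x,y) \<in> R\<^sup>*" using cg that unfolding connected_graph_def R_def by blast
    then obtain n where "(x,y) \<in> R ^^ n" using rtrancl_power by blast
    then show ?thesis unfolding N_def by (metis (mono_tags, lifting) fst_conv snd_conv someI)
  qed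
  define K where "K = Max (N ` (V \<times> V))"
  have NK: "N (x,y) \<le> K" if "x \<in> V" "y \<in> V" for x y
    unfolding K_def using fV that by (intro Max_ge) auto
  define M where "M = total_mass V m0"
  have Mp: "M > 0" using mass_pos[OF fV _ m0] uv M_def by auto
  define c where "c = 1 / (2 * M * ((real K)\<^sup>2 + 1))"
  have Kp: "(real K)\<^sup>2 + 1 > 0" by (metis add_nonneg_pos zero_le_power2 zero_less_one)
  have cp: "c > 0" unfolding c_def using Mp Kp by simp
  have "c * var1 V m0 f \<le> edge_energy V E (\<lambda>_. 1) f" for f
  proof -
    define En where "En = edge_energy V E (\<lambda>_. 1) f"
    have En0: "En \<ge> 0" unfolding En_def by (rule energy_nonneg[OF sg]) simp
    have b: "(f x - f u)\<^sup>2 \<le> (real K)\<^sup>2 * (2 * En)" if x: "x \<in> V" for x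
    proof -
      have "\<bar>f x - f u\<bar> \<le> real (N (x,u)) * sqrt (2 * En)"
        using path_bound[OF sg Np[OF x uv(1), unfolded R_def]] En_def by simp
      also have "\<dots> \<le> real K * sqrt (2 * En)" using NK[OF x uv(1)] En0 by (intro mult_right_mono) auto
      finally have "\<bar>f x - f u\<bar>\<^sup>2 \<le> (real K * sqrt (2 * En))\<^sup>2" by (intro power_mono) auto
      then show ?thesis using En0 by (simp add: power_mult_distrib)
    qed
    have "var1 V m0 f \<le> (\<Sum>x\<in>V. m0 x * (f x - f u)\<^sup>2)" using var_le Mp M_def by blast
    also have "\<dots> \<le> (\<Sum>x\<in>V. m0 x * ((real K)\<^sup>2 * (2 * En)))"
      using b m0 by (intro sum_mono mult_left_mono) (auto simp: less_imp_le)
    also have "\<dots> = M * ((real K)\<^sup>2 * (2 * En))" unfolding M_def total_mass_def by (simp add: sum_distrib_right)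
    also have "\<dots> \<le> M * (((real K)\<^sup>2 + 1) * (2 * En))" using Mp En0 by (intro mult_left_mono mult_right_mono) auto
    finally have "var1 V m0 f \<le> (2 * M * ((real K)\<^sup>2 + 1)) * En" by (simp add: algebra_simps)
    moreover have P: "2 * M * ((real K)\<^sup>2 + 1) > 0" using Mp Kp by simp
    ultimately have "var1 V m0 f / (2 * M * ((real K)\<^sup>2 + 1)) \<le> En"
      by (simp add: pos_divide_le_eq mult.commute)
    then show ?thesis unfolding c_def En_def by simp
  qed
  then have "c \<le> lambda1 V E m0 (\<lambda>_. 1)" using lambda_ge[OF fV m0 uv] by blast
  then show ?thesis using cp by linarith
qed

lemma sig_bdd:
  assumes sg: "simple_graph V E" and m0: "\<forall>u\<in>V. m0 u > 0" and dpos: "\<forall>e\<in>E. d e > 0"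
    and uv: "u \<in> V" "v \<in> V" "u \<noteq> v"
  shows "bdd_above {lambda1 V E m0 m1 | m1. admissible_edge_weight V E d m1}"
proof -
  have fV: "finite V" using sg_finite[OF sg] .
  have fE: "finite E" using sg_finiteE[OF sg] .
  define f where "f x = (if x = u then 1 else (0::real))" for x
  have fuv: "f u \<noteq> f v" using uv f_def by simp
  define B where "B = (\<Sum>e\<in>E. Dsq E d / (d e)\<^sup>2) / var1 V m0 f"
  have vp: "var1 V m0 f > 0" using var_pos[OF fV m0 uv(1,2) fuv] .
  show ?thesis
  proof (rule bdd_aboveI[of _ B])
    fix x assume "x \<in> {lambda1 V E m0 m1 | m1. admissible_edge_weight V E d m1}"
    then obtain m1 where x: "x = lambda1 V E m0 m1" and m1: "admissible_edge_weight V E d m1" by blast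
    have m1n: "\<forall>e\<in>E. m1 e \<ge> 0" using m1 admissible_edge_weight_def by blast
    have sm: "(\<Sum>e\<in>E. m1 e * (d e)\<^sup>2) = Dsq E d" using m1 admissible_edge_weight_def by blast
    have "x \<le> edge_energy V E m1 f / var1 V m0 f" using lambda_le[OF sg m0 m1n uv(1,2) fuv] x by simp
    also have "edge_energy V E m1 f \<le> (\<Sum>e\<in>E. Dsq E d / (d e)\<^sup>2)"
      unfolding energy_edges[OF sg]
    proof (rule sum_mono)
      fix e assume e: "e \<in> E"
      have sq: "(f (fst (ends e)) - f (snd (ends e)))\<^sup>2 \<le> 1" unfolding f_def by auto
      have "m1 e * (d e)\<^sup>2 \<le> (\<Sum>e\<in>E. m1 e * (d e)\<^sup>2)"
        using e fE m1n by (intro member_le_sum) auto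
      then have "m1 e * (d e)\<^sup>2 \<le> Dsq E d" using sm by simp
      moreover have "d e > 0" using dpos e by auto
      then have "(d e)\<^sup>2 > 0" by simp
      ultimately have "m1 e \<le> Dsq E d / (d e)\<^sup>2" by (simp add: pos_le_divide_eq)
      moreover have "m1 e * (f (fst (ends e)) - f (snd (ends e)))\<^sup>2 \<le> m1 e"
        using sq m1n e by (simp add: mult_left_le)
      ultimately show "m1 e * (f (fst (ends e)) - f (snd (ends e)))\<^sup>2 \<le> Dsq E d / (d e)\<^sup>2" by linarith
    qed
    then have "edge_energy V E m1 f / var1 V m0 f \<le> B" unfolding B_def using vp by (simp add: divide_right_mono)
    finally show "x \<le> B" .
  qed
qed

lemma sigma_pos:
  assumes sg: "simple_graph V E" and cg: "connected_graph V E" and m0: "\<forall>u\<in>V. m0 u > 0"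
    and dpos: "\<forall>e\<in>E. d e > 0" and uv: "u \<in> V" "v \<in> V" "u \<noteq> v"
  shows "sigma_inv V E m0 d > 0"
proof -
  have "lambda1 V E m0 (\<lambda>_. 1) \<le> sigma_inv V E m0 d"
    unfolding sigma_inv_def using adm_one[OF cg] sig_bdd[OF sg m0 dpos uv] by (intro cSup_upper) auto
  then show ?thesis using lam_pos[OF sg cg m0 uv] by linarith
qed

definition Aq :: "'a set \<Rightarrow> nat set \<Rightarrow> (nat \<Rightarrow> 'a \<Rightarrow> real) \<Rightarrow> real" where
  "Aq e J F = (\<Sum>j\<in>J. (F j (fst (ends e)) - F j (snd (ends e)))\<^sup>2)"

definition Vr :: "'a set \<Rightarrow> ('a \<Rightarrow> real) \<Rightarrow> nat set \<Rightarrow> (nat \<Rightarrow> 'a \<Rightarrow> real) \<Rightarrow> real" where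
  "Vr V m0 J F = (\<Sum>j\<in>J. var1 V m0 (F j))"

definition mixF :: "real \<Rightarrow> (nat \<Rightarrow> 'a \<Rightarrow> real) \<Rightarrow> (nat \<Rightarrow> 'a \<Rightarrow> real) \<Rightarrow> nat \<Rightarrow> 'a \<Rightarrow> real" where
  "mixF s F G n = (if even n then (\<lambda>u. sqrt s * F (n div 2) u) else (\<lambda>u. sqrt (1-s) * G (n div 2) u))"

definition mixJ :: "nat set \<Rightarrow> nat set \<Rightarrow> nat set" where
  "mixJ J K = (\<lambda>j. 2*j) ` J \<union> (\<lambda>j. 2*j+1) ` K"

lemma mix_sum:
  fixes Q :: "('a \<Rightarrow> real) \<Rightarrow> real"
  assumes hom: "\<And>c f. Q (\<lambda>u. c * f u) = c\<^sup>2 * Q f"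
    and fin: "finite J" "finite K" and s: "0 \<le> s" "s \<le> 1"
  shows "(\<Sum>n\<in>mixJ J K. Q (mixF s F G n)) = s * (\<Sum>j\<in>J. Q (F j)) + (1-s) * (\<Sum>j\<in>K. Q (G j))"
proof -
  have disj: "(\<lambda>j. 2*j) ` J \<inter> (\<lambda>j. 2*j+1) ` K = {}" by auto presburger
  have inj1: "inj_on (\<lambda>j::nat. 2*j) J" by (auto simp: inj_on_def)
  have inj2: "inj_on (\<lambda>j::nat. 2*j+1) K" by (auto simp: inj_on_def)
  have "(\<Sum>n\<in>mixJ J K. Q (mixF s F G n)) =
      (\<Sum>n\<in>(\<lambda>j. 2*j) ` J. Q (mixF s F G n)) + (\<Sum>n\<in>(\<lambda>j. 2*j+1) ` K. Q (mixF s F G n))"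
    unfolding mixJ_def using fin disj by (intro sum.union_disjoint) auto
  also have "(\<Sum>n\<in>(\<lambda>j. 2*j) ` J. Q (mixF s F G n)) = (\<Sum>j\<in>J. Q (mixF s F G (2*j)))"
    using sum.reindex[OF inj1] by simp
  also have "\<dots> = (\<Sum>j\<in>J. s * Q (F j))"
    unfolding mixF_def using s by (simp add: hom)
  also have "(\<Sum>n\<in>(\<lambda>j. 2*j+1) ` K. Q (mixF s F G n)) = (\<Sum>j\<in>K. Q (mixF s F G (2*j+1)))"
    using sum.reindex[OF inj2] by simp
  also have "\<dots> = (\<Sum>j\<in>K. (1-s) * Q (G j))"
    unfolding mixF_def using s by (simp add: hom)
  finally show ?thesis by (simp add: sum_distrib_left)
qed

lemma hom_edge: "(\<lambda>f::'a\<Rightarrow>real. (f a - f b)\<^sup>2) (\<lambda>u. c * f u) = c\<^sup>2 * (\<lambda>f. (f a - f b)\<^sup>2) f"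
  by (simp add: power2_eq_square algebra_simps)

lemma Aq_mix: "finite J \<Longrightarrow> finite K \<Longrightarrow> 0 \<le> s \<Longrightarrow> s \<le> 1 \<Longrightarrow>
  Aq e (mixJ J K) (mixF s F G) = s * Aq e J F + (1-s) * Aq e K G"
proof -
  assume a: "finite J" "finite K" "0 \<le> s" "s \<le> 1"
  have h: "\<And>c f. (\<lambda>f::'a\<Rightarrow>real. (f (fst (ends e)) - f (snd (ends e)))\<^sup>2) (\<lambda>u. c * f u)
      = c\<^sup>2 * (\<lambda>f::'a\<Rightarrow>real. (f (fst (ends e)) - f (snd (ends e)))\<^sup>2) f"
    by (simp add: power2_eq_square algebra_simps)
  show ?thesis unfolding Aq_def
    using mix_sum[where Q="\<lambda>f::'a\<Rightarrow>real. (f (fst (ends e)) - f (snd (ends e)))\<^sup>2", OF h a] by simp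
qed

lemma Vr_mix: "finite J \<Longrightarrow> finite K \<Longrightarrow> 0 \<le> s \<Longrightarrow> s \<le> 1 \<Longrightarrow>
  Vr V m0 (mixJ J K) (mixF s F G) = s * Vr V m0 J F + (1-s) * Vr V m0 K G"
  unfolding Vr_def
  using mix_sum[where Q="var1 V m0", OF var_scale] by simp

lemma Aq_scale: "Aq e J (\<lambda>j u. c * F j u) = c\<^sup>2 * Aq e J F"
  unfolding Aq_def by (simp add: sum_distrib_left power2_eq_square algebra_simps)

lemma Vr_scale: "Vr V m0 J (\<lambda>j u. c * F j u) = c\<^sup>2 * Vr V m0 J F"
  unfolding Vr_def by (simp add: sum_distrib_left var_scale)

lemma conn_from_energy:
  assumes sg: "simple_graph V E" and Vne: "V \<noteq> {}" and m0: "\<forall>u\<in>V. m0 u > 0"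
    and m1n: "\<forall>e\<in>E. m1 e \<ge> 0" and c: "c > 0"
    and H: "\<And>f. c * var1 V m0 f \<le> edge_energy V E m1 f"
  shows "connected_graph V {e\<in>E. m1 e > 0}"
proof (rule ccontr)
  have fV: "finite V" using sg_finite[OF sg] .
  define R where "R = {(x, y). {x, y} \<in> {e\<in>E. m1 e > 0}}"
  assume "\<not> connected_graph V {e\<in>E. m1 e > 0}"
  then obtain u v where uv: "u \<in> V" "v \<in> V" "(u,v) \<notin> R\<^sup>*"
    using Vne unfolding connected_graph_def R_def by blast
  define f where "f x = (if (u,x) \<in> R\<^sup>* then 1 else (0::real))" for x
  have "edge_energy V E m1 f = (1/2) * (\<Sum>x\<in>V. \<Sum>y\<in>V. 0)"
    unfolding edge_energy_def
  proof (intro arg_cong[where f="\<lambda>t. (1/2) * t"] sum.cong refl)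
    fix x y
    show "(if {x, y} \<in> E then m1 {x, y} * (f x - f y)\<^sup>2 else 0) = 0"
    proof (cases "{x,y} \<in> E \<and> m1 {x,y} > 0")
      case True
      then have "(x,y) \<in> R" "(y,x) \<in> R" unfolding R_def by (auto simp: insert_commute)
      then have "(u,x) \<in> R\<^sup>* \<longleftrightarrow> (u,y) \<in> R\<^sup>*" by (meson rtrancl.rtrancl_into_rtrancl)
      then have "f x = f y" unfolding f_def by simp
      then show ?thesis by simp
    next
      case False
      then show ?thesis using m1n by force
    qed
  qed
  then have "edge_energy V E m1 f = 0" by simp
  then have "c * var1 V m0 f \<le> 0" using H[of f] by simp
  moreover have "f u \<noteq> f v" using uv unfolding f_def by simp
  then have "var1 V m0 f > 0" using var_pos[OF fV m0 uv(1,2)] by blast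
  ultimately show False using c by (simp add: mult_le_0_iff)
qed

lemma exists_config:
  assumes sg: "simple_graph V E" and cg: "connected_graph V E" and m0: "\<forall>u\<in>V. m0 u > 0"
    and dpos: "\<forall>e\<in>E. d e > 0" and uv: "u \<in> V" "v \<in> V" "u \<noteq> v"
    and S: "S > 0" "S * sigma_inv V E m0 d < Dsq E d"
  shows "\<exists>J F. finite J \<and> (\<forall>e\<in>E. Aq e J F \<le> (d e)\<^sup>2) \<and> Vr V m0 J F \<ge> S"
proof (rule ccontr)
  assume NC: "\<not> ?thesis"
  have fV: "finite V" using sg_finite[OF sg] .
  have fE: "finite E" using sg_finiteE[OF sg] .
  have Ene: "E \<noteq> {}" using E_nonempty[OF cg uv] .
  have Dp: "Dsq E d > 0" using Dsq_pos[OF sg Ene dpos] .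
  have d2: "(d e)\<^sup>2 > 0" if "e \<in> E" for e using dpos that by auto
  have Aq0: "Aq e J F \<ge> 0" for e :: "'a set" and J F unfolding Aq_def by (simp add: sum_nonneg)
  have Vr0: "Vr V m0 J F \<ge> 0" for J F unfolding Vr_def using var_nonneg[OF m0] by (simp add: sum_nonneg)
  define C where "C = {x :: nat set \<times> (nat \<Rightarrow> 'a \<Rightarrow> real). finite (fst x)}"
  define g where "g e x = S * Aq e (fst x) (snd x) / (d e)\<^sup>2 - Vr V m0 (fst x) (snd x)" for e x
  have mix: "\<exists>w\<in>C. \<forall>e\<in>E. g e w = s * g e x + (1-s) * g e z"
    if "x \<in> C" "z \<in> C" "0 \<le> s" "s \<le> 1" for x z s
  proof -
    define w where "w = (mixJ (fst x) (fst z), mixF s (snd x) (snd z))"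
    have fw: "finite (fst x)" "finite (fst z)" using that C_def by auto
    have "w \<in> C" unfolding w_def C_def mixJ_def using fw by simp
    moreover have "\<forall>e\<in>E. g e w = s * g e x + (1-s) * g e z"
    proof
      fix e assume "e \<in> E"
      have a: "Aq e (mixJ (fst x) (fst z)) (mixF s (snd x) (snd z)) = s * Aq e (fst x) (snd x) + (1-s) * Aq e (fst z) (snd z)"
        using Aq_mix[OF fw that(3,4)] .
      have b: "Vr V m0 (mixJ (fst x) (fst z)) (mixF s (snd x) (snd z)) = s * Vr V m0 (fst x) (snd x) + (1-s) * Vr V m0 (fst z) (snd z)"
        using Vr_mix[OF fw that(3,4)] .
      have c: "S * (s * A + (1-s) * B) / D = s * (S * A / D) + (1-s) * (S * B / D)" for A B D :: real
        by (simp add: algebra_simps add_divide_distrib diff_divide_distrib)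
      show "g e w = s * g e x + (1-s) * g e z"
        unfolding g_def w_def fst_conv snd_conv a b c by (simp add: algebra_simps)
    qed
    ultimately show ?thesis by blast
  qed
  have cov: "\<exists>e\<in>E. g e x \<ge> 0" if x: "x \<in> C" for x
  proof (rule ccontr)
    assume "\<not> (\<exists>e\<in>E. g e x \<ge> 0)"
    then have neg: "\<forall>e\<in>E. S * Aq e (fst x) (snd x) / (d e)\<^sup>2 < Vr V m0 (fst x) (snd x)"
      unfolding g_def by auto
    obtain e0 where "e0 \<in> E" using Ene by blast
    have "0 \<le> S * Aq e0 (fst x) (snd x) / (d e0)\<^sup>2" using S Aq0[of e0 "fst x" "snd x"] by simp
    then have Vp: "Vr V m0 (fst x) (snd x) > 0" using neg \<open>e0 \<in> E\<close> by fastforce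
    define Q where "Q = Vr V m0 (fst x) (snd x)"
    define \<tau> where "\<tau> = sqrt (S / Q)"
    have t2: "\<tau>\<^sup>2 = S / Q" unfolding \<tau>_def using S Vp Q_def by simp
    define F' where "F' = (\<lambda>j u. \<tau> * snd x j u)"
    have "Vr V m0 (fst x) F' = S" unfolding F'_def Vr_scale t2 Q_def using Vp by simp
    moreover have "Aq e (fst x) F' \<le> (d e)\<^sup>2" if e: "e \<in> E" for e
    proof -
      have "S * Aq e (fst x) (snd x) / (d e)\<^sup>2 < Q" using neg e Q_def by blast
      then have "S * Aq e (fst x) (snd x) < Q * (d e)\<^sup>2"
        using d2[OF e] by (simp add: pos_divide_less_eq)
      then have "S / Q * Aq e (fst x) (snd x) < (d e)\<^sup>2"
        using Vp Q_def by (simp add: pos_divide_less_eq mult.commute)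
      then show ?thesis unfolding F'_def Aq_scale t2 by simp
    qed
    moreover have "finite (fst x)" using x C_def by simp
    ultimately show False using NC by force
  qed
  obtain y where y: "\<forall>e\<in>E. y e \<ge> 0" "sum y E = 1" "\<forall>x\<in>C. (\<Sum>e\<in>E. y e * g e x) \<ge> 0"
    using fgh[of E C g, OF fE Ene mix cov] by blast
  define m1 where "m1 e = y e * Dsq E d / (d e)\<^sup>2" for e
  have m1n: "\<forall>e\<in>E. m1 e \<ge> 0" unfolding m1_def using y(1) Dp by simp
  have key: "(Dsq E d / S) * var1 V m0 f \<le> edge_energy V E m1 f" for f
  proof -
    define q where "q e = (f (fst (ends e)) - f (snd (ends e)))\<^sup>2" for e
    have x0: "({0::nat}, \<lambda>_. f) \<in> C" unfolding C_def by simp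
    have gx: "g e ({0}, \<lambda>_. f) = S * q e / (d e)\<^sup>2 - var1 V m0 f" for e
      unfolding g_def Aq_def Vr_def q_def by simp
    have "0 \<le> (\<Sum>e\<in>E. y e * g e ({0}, \<lambda>_. f))" using y(3) x0 by blast
    also have "\<dots> = (\<Sum>e\<in>E. y e * (S * q e / (d e)\<^sup>2 - var1 V m0 f))"
      by (intro sum.cong refl) (simp only: gx)
    also have "\<dots> = (\<Sum>e\<in>E. y e * (S * q e / (d e)\<^sup>2)) - var1 V m0 f"
      using y(2) by (simp add: right_diff_distrib sum_subtractf sum_distrib_right[symmetric])
    finally have A: "var1 V m0 f \<le> (\<Sum>e\<in>E. y e * (S * q e / (d e)\<^sup>2))" by simp
    have "edge_energy V E m1 f = (\<Sum>e\<in>E. m1 e * q e)" unfolding energy_edges[OF sg] q_def ..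
    also have "\<dots> = (Dsq E d / S) * (\<Sum>e\<in>E. y e * (S * q e / (d e)\<^sup>2))"
      unfolding m1_def sum_distrib_left using S by (intro sum.cong refl) (simp add: field_simps)
    finally have EE: "edge_energy V E m1 f = (Dsq E d / S) * (\<Sum>e\<in>E. y e * (S * q e / (d e)\<^sup>2))" .
    have "Dsq E d / S \<ge> 0" using Dp S by simp
    then show ?thesis unfolding EE using mult_left_mono[OF A] by blast
  qed
  have cD: "Dsq E d / S > 0" using Dp S by simp
  have adm: "admissible_edge_weight V E d m1"
    unfolding admissible_edge_weight_def
  proof (intro conjI)
    show "\<forall>e\<in>E. 0 \<le> m1 e" using m1n .
    show "connected_graph V {e \<in> E. 0 < m1 e}"
      using conn_from_energy[OF sg _ m0 m1n cD key] uv by blast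
    have "(\<Sum>e\<in>E. m1 e * (d e)\<^sup>2) = (\<Sum>e\<in>E. y e * Dsq E d)"
      unfolding m1_def using d2 by (intro sum.cong refl) simp
    also have "\<dots> = Dsq E d" using y(2) by (simp add: sum_distrib_right[symmetric])
    finally show "(\<Sum>e\<in>E. m1 e * (d e)\<^sup>2) = Dsq E d" .
  qed
  have "Dsq E d / S \<le> lambda1 V E m0 m1" using lambda_ge[OF fV m0 uv] key by blast
  also have "lambda1 V E m0 m1 \<le> sigma_inv V E m0 d"
    unfolding sigma_inv_def using adm sig_bdd[OF sg m0 dpos uv] by (intro cSup_upper) auto
  finally have "Dsq E d \<le> S * sigma_inv V E m0 d" using S by (simp add: pos_divide_le_eq mult.commute)
  then show False using S by linarith
qed

lemma center:
  assumes Mp: "total_mass V m0 > 0"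
  shows "centered V m0 J (\<lambda>j u. F j u - mean_val V m0 (F j))"
    "Aq e J (\<lambda>j u. F j u - mean_val V m0 (F j)) = Aq e J F"
    "Vr V m0 J (\<lambda>j u. F j u - mean_val V m0 (F j)) = Vr V m0 J F"
proof -
  define F' where "F' = (\<lambda>j u. F j u - mean_val V m0 (F j))"
  show "centered V m0 J (\<lambda>j u. F j u - mean_val V m0 (F j))" unfolding centered_def
  proof
    fix j
    have "(\<Sum>u\<in>V. m0 u * (F j u - mean_val V m0 (F j))) = (\<Sum>u\<in>V. m0 u * F j u) - mean_val V m0 (F j) * (\<Sum>u\<in>V. m0 u)"
      by (simp add: algebra_simps sum_subtractf sum_distrib_right)
    also have "\<dots> = 0" using sum_m0_f[OF Mp, of "F j"] unfolding total_mass_def by simp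
    finally show "(\<Sum>u\<in>V. m0 u * (F j u - mean_val V m0 (F j))) = 0" .
  qed
  show "Aq e J (\<lambda>j u. F j u - mean_val V m0 (F j)) = Aq e J F" unfolding Aq_def by simp
  show "Vr V m0 J (\<lambda>j u. F j u - mean_val V m0 (F j)) = Vr V m0 J F" unfolding Vr_def using var_shift_inv[OF Mp] by simp
qed

lemma Vr_kern:
  assumes Mp: "total_mass V m0 > 0" and c: "centered V m0 J F"
  shows "Vr V m0 J F = (\<Sum>u\<in>V. m0 u * kern J F u u)"
proof -
  have "Vr V m0 J F = (\<Sum>j\<in>J. \<Sum>u\<in>V. m0 u * (F j u)\<^sup>2)"
    unfolding Vr_def using c var_centered[OF Mp] unfolding centered_def by simp
  also have "\<dots> = (\<Sum>u\<in>V. \<Sum>j\<in>J. m0 u * (F j u)\<^sup>2)" by (rule sum.swap)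
  also have "\<dots> = (\<Sum>u\<in>V. m0 u * kern J F u u)"
    unfolding kern_def by (simp add: sum_distrib_left power2_eq_square)
  finally show ?thesis .
qed

lemma Aq_kern:
  "Aq e J F = kern J F (fst (ends e)) (fst (ends e)) + kern J F (snd (ends e)) (snd (ends e))
     - 2 * kern J F (fst (ends e)) (snd (ends e))"
  unfolding Aq_def kern_def
  by (simp add: power2_eq_square algebra_simps sum.distrib sum_subtractf sum_distrib_left)

lemma centered_scale: "centered V m0 J F \<Longrightarrow> centered V m0 J (\<lambda>j u. c * F j u)"
  unfolding centered_def by (simp add: sum_distrib_left[symmetric] mult.left_commute)

lemma build:
  assumes sg: "simple_graph V E" and m0: "\<forall>u\<in>V. m0 u > 0" and Vne: "V \<noteq> {}"
    and dpos: "\<forall>e\<in>E. d e > 0"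
    and fJ: "finite J" and cJ: "card J < card V" and cen: "centered V m0 J H"
    and SK: "(\<Sum>u\<in>V. m0 u * kern J H u u) = S" and S0: "0 \<le> S" and SM: "S \<le> total_mass V m0"
    and edges: "\<forall>e\<in>E. Aq e J H \<le> (d e)\<^sup>2"
  shows "\<exists>\<phi>. admissible_map V E m0 d \<phi> \<and> vnorm2 V (bary V m0 \<phi>) = 1 - S / total_mass V m0"
proof -
  have fV: "finite V" using sg_finite[OF sg] .
  define M where "M = total_mass V m0"
  have Mp: "M > 0" using mass_pos[OF fV Vne m0] M_def by simp
  obtain z where z: "z \<in> V" using Vne by blast
  have "card J \<le> card (V - {z})" using cJ z fV by simp
  then obtain \<iota> where \<iota>: "\<iota> ` J \<subseteq> V - {z}" "inj_on \<iota> J"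
    using card_le_inj[OF fJ _] fV by blast
  define b where "b = sqrt (1 - S / M)"
  have SM1: "S / M \<le> 1" using SM Mp M_def by simp
  have b2: "b * b = 1 - S / M" unfolding b_def using SM1 by simp
  define \<phi> where "\<phi> u i = (if i \<in> \<iota> ` J then H (the_inv_into J \<iota> i) u else if i = z then b else 0)" for u i
  have zn: "z \<in> V - \<iota> ` J" using \<iota>(1) z by auto
  have sumP: "(\<Sum>i\<in>V. P (\<phi> u i) (\<phi> v i)) = (\<Sum>j\<in>J. P (H j u) (H j v)) + P b b"
    if P0: "P 0 0 = 0" for P :: "real \<Rightarrow> real \<Rightarrow> real" and u v
  proof -
    have V: "V = \<iota> ` J \<union> (V - \<iota> ` J)" using \<iota>(1) by auto
    have "(\<Sum>i\<in>V. P (\<phi> u i) (\<phi> v i)) = (\<Sum>i\<in>\<iota> ` J. P (\<phi> u i) (\<phi> v i)) + (\<Sum>i\<in>V - \<iota> ` J. P (\<phi> u i) (\<phi> v i))"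
      using fV fJ by (subst V, intro sum.union_disjoint) auto
    also have "(\<Sum>i\<in>\<iota> ` J. P (\<phi> u i) (\<phi> v i)) = (\<Sum>j\<in>J. P (\<phi> u (\<iota> j)) (\<phi> v (\<iota> j)))"
      by (rule sum.reindex[OF \<iota>(2), unfolded comp_def])
    also have "\<dots> = (\<Sum>j\<in>J. P (H j u) (H j v))"
      by (intro sum.cong refl) (simp add: \<phi>_def the_inv_into_f_f[OF \<iota>(2)])
    also have "(\<Sum>i\<in>V - \<iota> ` J. P (\<phi> u i) (\<phi> v i)) = P (\<phi> u z) (\<phi> v z) + (\<Sum>i\<in>(V - \<iota> ` J) - {z}. P (\<phi> u i) (\<phi> v i))"
      using fV zn by (intro sum.remove) auto
    also have "(\<Sum>i\<in>(V - \<iota> ` J) - {z}. P (\<phi> u i) (\<phi> v i)) = 0"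
      using P0 by (intro sum.neutral) (auto simp: \<phi>_def)
    also have "P (\<phi> u z) (\<phi> v z) = P b b" using zn by (simp add: \<phi>_def)
    finally show ?thesis by simp
  qed
  have vn: "vnorm2 V (\<phi> u) = kern J H u u + b * b" for u
    unfolding vnorm2_def kern_def power2_eq_square using sumP[of "\<lambda>x y. x * y" u u] by simp
  have adm1: "(\<Sum>u\<in>V. m0 u * vnorm2 V (\<phi> u)) = M"
  proof -
    have "(\<Sum>u\<in>V. m0 u * vnorm2 V (\<phi> u)) = (\<Sum>u\<in>V. m0 u * kern J H u u) + (\<Sum>u\<in>V. m0 u) * (b * b)"
      unfolding vn distrib_left sum.distrib sum_distrib_right ..
    also have "\<dots> = S + M * (1 - S / M)" using SK b2 by (simp add: M_def total_mass_def)
    also have "\<dots> = M" using Mp by (simp add: algebra_simps)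
    finally show ?thesis .
  qed
  have adm2: "vnorm V (\<lambda>i. \<phi> x i - \<phi> y i) \<le> d {x, y}" if e: "{x,y} \<in> E" for x y
  proof -
    have "vnorm2 V (\<lambda>i. \<phi> x i - \<phi> y i) = (\<Sum>j\<in>J. (H j x - H j y)\<^sup>2)"
      unfolding vnorm2_def using sumP[of "\<lambda>p q. (p - q)\<^sup>2" x y] by simp
    also have "\<dots> = Aq {x,y} J H" unfolding Aq_def by (intro sum.cong refl) (simp add: ends_sq)
    also have "\<dots> \<le> (d {x,y})\<^sup>2" using edges e by blast
    finally have "sqrt (vnorm2 V (\<lambda>i. \<phi> x i - \<phi> y i)) \<le> sqrt ((d {x,y})\<^sup>2)"
      using real_sqrt_le_mono by blast
    moreover have "d {x,y} > 0" using dpos e by blast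
    ultimately show ?thesis unfolding vnorm_def by simp
  qed
  have bar: "bary V m0 \<phi> i = (if i = z then b else 0)" if i: "i \<in> V" for i
  proof (cases "i \<in> \<iota> ` J")
    case True
    then obtain j where j: "j \<in> J" "i = \<iota> j" by blast
    have iz: "i \<noteq> z" using True \<iota>(1) by auto
    have "(\<Sum>u\<in>V. m0 u * \<phi> u i) = (\<Sum>u\<in>V. m0 u * H j u)"
      using True j by (simp add: \<phi>_def the_inv_into_f_f[OF \<iota>(2)])
    also have "\<dots> = 0" using cen j(1) unfolding centered_def by blast
    finally show ?thesis unfolding bary_def using iz by simp
  next
    case False
    show ?thesis
    proof (cases "i = z")
      case True
      have "(\<Sum>u\<in>V. m0 u * \<phi> u i) = (\<Sum>u\<in>V. m0 u) * b" using False True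
        by (simp add: \<phi>_def sum_distrib_right)
      then show ?thesis unfolding bary_def using True Mp by (simp add: M_def total_mass_def)
    next
      case iz: False
      then show ?thesis unfolding bary_def using False by (simp add: \<phi>_def)
    qed
  qed
  have "vnorm2 V (bary V m0 \<phi>) = (\<Sum>i\<in>V. (if i = z then b * b else 0))"
    unfolding vnorm2_def power2_eq_square by (intro sum.cong refl) (simp add: bar)
  also have "\<dots> = b * b" using fV z by simp
  finally have "vnorm2 V (bary V m0 \<phi>) = 1 - S / M" using b2 by simp
  moreover have "admissible_map V E m0 d \<phi>" unfolding admissible_map_def using adm1 adm2 M_def by blast
  ultimately show ?thesis unfolding M_def by blast
qed

lemma delta_bdd: "bdd_below {vnorm2 V (bary V m0 \<phi>) | \<phi>. admissible_map V E m0 d \<phi>}"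
  by (rule bdd_belowI[of _ 0]) (auto simp: vnorm2_def intro!: sum_nonneg)

lemma upper:
  assumes sg: "simple_graph V E" and cg: "connected_graph V E" and m0: "\<forall>u\<in>V. m0 u > 0"
    and dpos: "\<forall>e\<in>E. d e > 0" and uv: "u \<in> V" "v \<in> V" "u \<noteq> v"
    and S: "0 < S" "S < total_mass V m0" "S * sigma_inv V E m0 d < Dsq E d"
  shows "delta_inv V E m0 d \<le> 1 - S / total_mass V m0"
proof -
  have fV: "finite V" using sg_finite[OF sg] .
  have Vne: "V \<noteq> {}" using uv by auto
  have Mp: "total_mass V m0 > 0" using mass_pos[OF fV Vne m0] .
  obtain J F where JF: "finite J" "\<forall>e\<in>E. Aq e J F \<le> (d e)\<^sup>2" "Vr V m0 J F \<ge> S"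
    using exists_config[OF sg cg m0 dpos uv S(1,3)] by blast
  define F1 where "F1 = (\<lambda>j u. F j u - mean_val V m0 (F j))"
  have c1: "centered V m0 J F1" "\<And>e. Aq e J F1 = Aq e J F" "Vr V m0 J F1 = Vr V m0 J F"
    unfolding F1_def using center[OF Mp] by auto
  obtain J' G where G: "finite J'" "card J' < card V" "centered V m0 J' G"
    "\<forall>x\<in>V. \<forall>y\<in>V. kern J' G x y = kern J F1 x y"
    using reduce[OF fV uv(1) m0 JF(1) c1(1)] by blast
  have VrG: "Vr V m0 J' G = Vr V m0 J F1"
    unfolding Vr_kern[OF Mp G(3)] Vr_kern[OF Mp c1(1)] using G(4) by simp
  have AqG: "Aq e J' G \<le> (d e)\<^sup>2" if e: "e \<in> E" for e
  proof -
    have ab: "fst (ends e) \<in> V" "snd (ends e) \<in> V" using ends_in[OF sg e] by auto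
    have "Aq e J' G = Aq e J F1" unfolding Aq_kern using G(4) ab by simp
    then show ?thesis using c1(2) JF(2) e by simp
  qed
  define Q where "Q = Vr V m0 J' G"
  have QS: "Q \<ge> S" using VrG c1(3) JF(3) Q_def by simp
  have Qp: "Q > 0" using QS S by simp
  define \<tau> where "\<tau> = sqrt (S / Q)"
  have t2: "\<tau>\<^sup>2 = S / Q" unfolding \<tau>_def using S Qp by simp
  have t21: "\<tau>\<^sup>2 \<le> 1" using t2 QS Qp by simp
  define H where "H = (\<lambda>j u. \<tau> * G j u)"
  have cH: "centered V m0 J' H" unfolding H_def by (rule centered_scale[OF G(3)])
  have SH: "(\<Sum>u\<in>V. m0 u * kern J' H u u) = S"
  proof -
    have "(\<Sum>u\<in>V. m0 u * kern J' H u u) = Vr V m0 J' H" using Vr_kern[OF Mp cH] by simp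
    also have "\<dots> = \<tau>\<^sup>2 * Q" unfolding H_def Vr_scale Q_def ..
    also have "\<dots> = S" using t2 Qp by simp
    finally show ?thesis .
  qed
  have AH: "\<forall>e\<in>E. Aq e J' H \<le> (d e)\<^sup>2"
  proof
    fix e assume e: "e \<in> E"
    have A0: "Aq e J' G \<ge> 0" unfolding Aq_def by (simp add: sum_nonneg)
    have "Aq e J' H = \<tau>\<^sup>2 * Aq e J' G" unfolding H_def Aq_scale ..
    also have "\<dots> \<le> Aq e J' G" using t21 A0 by (simp add: mult_left_le_one_le)
    also have "\<dots> \<le> (d e)\<^sup>2" using AqG[OF e] .
    finally show "Aq e J' H \<le> (d e)\<^sup>2" .
  qed
  obtain \<phi> where \<phi>: "admissible_map V E m0 d \<phi>" "vnorm2 V (bary V m0 \<phi>) = 1 - S / total_mass V m0"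
    using build[OF sg m0 Vne dpos G(1,2) cH SH _ _ AH] S by auto
  have "delta_inv V E m0 d \<le> vnorm2 V (bary V m0 \<phi>)"
    unfolding delta_inv_def using \<phi>(1) delta_bdd by (intro cInf_lower) auto
  then show ?thesis using \<phi>(2) by simp
qed

theorem corollary2p5:
  fixes V :: "'a set" and E :: "'a set set"
    and m0 :: "'a \<Rightarrow> real" and d :: "'a set \<Rightarrow> real"
  assumes "simple_graph V E"
    and "connected_graph V E"
    and "\<forall>u\<in>V. m0 u > 0"
    and "\<forall>e\<in>E. d e > 0"
  shows "delta_inv V E m0 d =
    max (1 - (Dsq E d / total_mass V m0) / sigma_inv V E m0 d) 0"
proof -
  note sg = assms(1) and cg = assms(2) and m0 = assms(3) and dpos = assms(4)
  have fV: "finite V" using sg_finite[OF sg] .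
  have Vne: "V \<noteq> {}" using cg connected_graph_def by blast
  define M where "M = total_mass V m0"
  have Mp: "M > 0" using mass_pos[OF fV Vne m0] M_def by simp
  define D where "D = Dsq E d"
  define \<sigma> where "\<sigma> = sigma_inv V E m0 d"
  define \<delta> where "\<delta> = delta_inv V E m0 d"
  have vn_ind: "vnorm2 V (\<lambda>i. if i = w then 1 else 0) = 1" if "w \<in> V" for w
  proof -
    have "(\<Sum>i\<in>V. (if i = w then (1::real) else 0)\<^sup>2) = (\<Sum>i\<in>V. if i = w then 1 else 0)"
      by (intro sum.cong refl) simp
    also have "\<dots> = 1" using fV that by simp
    finally show ?thesis unfolding vnorm2_def .
  qed
  show ?thesis
  proof (cases "\<exists>u\<in>V. \<exists>v\<in>V. u \<noteq> v")
    case False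
    then obtain w where Vw: "V = {w}" using Vne by blast
    have Ee: "E = {}"
    proof (rule ccontr)
      assume "E \<noteq> {}"
      then obtain e where e: "e \<in> E" by blast
      then obtain x y where "e = {x,y}" "x \<noteq> y" "x \<in> V" "y \<in> V"
        using sg unfolding simple_graph_def by meson
      then show False using Vw by auto
    qed
    have D0: "Dsq E d = 0" unfolding Dsq_def Ee by simp
    have Mw: "total_mass V m0 = m0 w" unfolding total_mass_def Vw by simp
    have mw: "m0 w > 0" using m0 Vw by simp
    have one: "vnorm2 V (bary V m0 \<phi>) = 1" if "admissible_map V E m0 d \<phi>" for \<phi>
    proof -
      have "m0 w * vnorm2 V (\<phi> w) = m0 w" using that Mw unfolding admissible_map_def Vw by simp
      then have n1: "vnorm2 V (\<phi> w) = 1" using mw by simp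
      have "bary V m0 \<phi> = \<phi> w" unfolding bary_def Mw using mw by (simp add: Vw)
      then show ?thesis using n1 by simp
    qed
    define \<phi>0 where "\<phi>0 = (\<lambda>(u::'a) (i::'a). if i = w then (1::real) else 0)"
    have adm0: "admissible_map V E m0 d \<phi>0"
      unfolding admissible_map_def using vn_ind[of w] Vw Ee Mw by (simp add: \<phi>0_def)
    have "delta_inv V E m0 d = 1"
    proof (rule antisym)
      show "delta_inv V E m0 d \<le> 1"
        unfolding delta_inv_def using adm0 one[OF adm0] delta_bdd by (intro cInf_lower) force+
      show "1 \<le> delta_inv V E m0 d"
        unfolding delta_inv_def using adm0 one by (intro cInf_greatest) auto
    qed
    then show ?thesis using D0 by simp
  next
    case True
    then obtain u v where uv: "u \<in> V" "v \<in> V" "u \<noteq> v" by blast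
    have sp: "\<sigma> > 0" using sigma_pos[OF sg cg m0 dpos uv] \<sigma>_def by simp
    have Ene: "E \<noteq> {}" using E_nonempty[OF cg uv] .
    have Dp: "D > 0" using Dsq_pos[OF sg Ene dpos] D_def by simp
    have eqr: "D / M / \<sigma> = D / (M * \<sigma>)" by simp
    have lower: "max (1 - D / M / \<sigma>) 0 \<le> \<delta>"
      unfolding \<delta>_def delta_inv_def
    proof (rule cInf_greatest)
      define \<phi>0 where "\<phi>0 = (\<lambda>(x::'a) (i::'a). if i = u then (1::real) else 0)"
      have "admissible_map V E m0 d \<phi>0"
        unfolding admissible_map_def
      proof (intro conjI allI impI)
        show "(\<Sum>x\<in>V. m0 x * vnorm2 V (\<phi>0 x)) = total_mass V m0"
          unfolding \<phi>0_def using vn_ind[OF uv(1)] by (simp add: total_mass_def)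
        fix x y assume e: "{x,y} \<in> E"
        have "d {x,y} > 0" using dpos e by blast
        then show "vnorm V (\<lambda>i. \<phi>0 x i - \<phi>0 y i) \<le> d {x, y}"
          unfolding vnorm_def vnorm2_def \<phi>0_def by simp
      qed
      then show "{vnorm2 V (bary V m0 \<phi>) |\<phi>. admissible_map V E m0 d \<phi>} \<noteq> {}" by blast
    next
      fix x assume "x \<in> {vnorm2 V (bary V m0 \<phi>) |\<phi>. admissible_map V E m0 d \<phi>}"
      then obtain \<phi> where \<phi>: "admissible_map V E m0 d \<phi>" "x = vnorm2 V (bary V m0 \<phi>)" by blast
      have x0: "x \<ge> 0" unfolding \<phi>(2) vnorm2_def by (simp add: sum_nonneg)
      have W: "lambda1 V E m0 m1 * (M - M * x) \<le> D" if "admissible_edge_weight V E d m1" for m1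
        using weak[OF sg m0 Vne \<phi>(1) that] \<phi>(2) M_def D_def by simp
      have "1 - D / M / \<sigma> \<le> x"
      proof (cases "x \<ge> 1")
        case True
        have "D / M / \<sigma> \<ge> 0" using Dp Mp sp by simp
        then show ?thesis using True by linarith
      next
        case False
        have P: "M - M * x > 0" using False Mp by (simp add: algebra_simps)
        have "\<sigma> \<le> D / (M - M * x)"
          unfolding \<sigma>_def sigma_inv_def
        proof (rule cSup_least)
          show "{lambda1 V E m0 m1 |m1. admissible_edge_weight V E d m1} \<noteq> {}"
            using adm_one[OF cg] by blast
          fix y assume "y \<in> {lambda1 V E m0 m1 |m1. admissible_edge_weight V E d m1}"
          then obtain m1 where "admissible_edge_weight V E d m1" "y = lambda1 V E m0 m1" by blast
          then show "y \<le> D / (M - M * x)" using W P by (simp add: pos_le_divide_eq)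
        qed
        then have "\<sigma> * (M - M * x) \<le> D" using P by (simp add: pos_le_divide_eq)
        then have "M * \<sigma> * (1 - x) \<le> D" by (simp add: algebra_simps)
        then have "1 - x \<le> D / (M * \<sigma>)" using Mp sp by (simp add: pos_le_divide_eq mult.commute)
        then show ?thesis using eqr by linarith
      qed
      then show "max (1 - D / M / \<sigma>) 0 \<le> x" using x0 by simp
    qed
    define s0 where "s0 = min M (D / \<sigma>)"
    have s0p: "s0 > 0" unfolding s0_def using Mp Dp sp by simp
    have up: "\<delta> \<le> 1 - s0 / M"
    proof (rule ccontr)
      assume "\<not> \<delta> \<le> 1 - s0 / M"
      then have lt: "M * (1 - \<delta>) < s0" using Mp by (simp add: field_simps)
      define S where "S = max (s0 / 2) ((M * (1 - \<delta>) + s0) / 2)"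
      have h1: "M * (1 - \<delta>) < (M * (1 - \<delta>) + s0) / 2" "(M * (1 - \<delta>) + s0) / 2 < s0"
        using lt by (simp_all add: field_simps)
      have S: "0 < S" "S < s0" "M * (1 - \<delta>) < S"
        unfolding S_def using s0p h1 by (auto simp: max_def)
      have SM: "S < M" using S s0_def by simp
      have "S < D / \<sigma>" using S s0_def by simp
      then have SD: "S * \<sigma> < D" using sp by (simp add: pos_less_divide_eq)
      have "\<delta> \<le> 1 - S / M" using upper[OF sg cg m0 dpos uv S(1)] SM SD
        unfolding \<delta>_def M_def D_def \<sigma>_def by simp
      then have "S \<le> M * (1 - \<delta>)" using Mp by (simp add: field_simps)
      then show False using S(3) by linarith
    qed
    have "1 - s0 / M \<le> max (1 - D / M / \<sigma>) 0"
    proof (cases "D / \<sigma> \<le> M")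
      case True
      then have "s0 = D / \<sigma>" unfolding s0_def by simp
      then have "1 - s0 / M = 1 - D / M / \<sigma>" by simp
      then show ?thesis by simp
    next
      case False
      then have "s0 = M" unfolding s0_def by simp
      then show ?thesis using Mp by simp
    qed
    then have "\<delta> = max (1 - D / M / \<sigma>) 0" using up lower by linarith
    then show ?thesis unfolding \<delta>_def D_def M_def \<sigma>_def .
  qed
qed

end
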